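(* Fix $n$ and let $1\leq k\leq n-1$. Then $$H_{k,k}(\mathbf{x})=C_k\,e_{k+1}(\mathbf{x})\prod_{S\subseteq[n],\ |S|\leq k-1}\left(\partial^S e_k(\mathbf{x})\right)^{|S|!\,(n-|S|-1)},$$ where $C_k$ is a positive constant and $\partial^S=\prod_{j\in S}\partial/\partial x_j$.
   Context: Variables $\mathbf{x}=(x_1,\ldots,x_n)$; $[n]=\{1,\ldots,n\}$. For nonempty $S\subseteq[n]$, $e_k(S)=\sum_{T\subseteq S,|T|=k}\prod_{j\in T}x_j$ (with $e_0(S)=1$), $e_k(\mathbf{x})=e_k([n])$, and for $k\geq1$, $q_k(S)=e_k(S)/e_{k-1}(S)$. For $S\subseteq[n]$ write $S'=[n]\setminus S$. For a finite connected multigraph $G=(V,E)$ with a variable $x_e$ per edge, the spanning tree polynomial is $T_G=\sum_T\prod_{e\in T}x_e$, summed over all spanning trees $T$ of $G$. Graph $G_{n,k}$, $n\geq k\geq 1$: vertices $s$, $z$, and all words $w=w_1\cdots w_\ell$ with $1\leq\ell\leq k$, $w_i\in[n]$, and $w_i\neq w_j$ for $i\neq j$; edges: (1) $s$ to $i$ for each $1\leq i\leq n$; (2) $w_1\cdots w_{i-1}$ to $w_1\cdots w_{i-1}w_i$ for all $2\leq i\leq k$; (3) $w_1\cdots w_k$ to $z$ for every word of length $k$. For $r\geq k$, $H_{k,r}(\mathbf{x})$ is obtained from $T_{G_{n,k}}$ by setting the edge variables to: (a) $r!\,x_i$ for the edge $s$–$i$; (b) $(r-i+1)!\,x_{w_i}$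 for the edge $w_1\cdots w_{i-1}$–$w_1\cdots w_i$; (c) $(r-k+1)!\,q_{r-k+1}(\{w_1,\ldots,w_k\}')$ for the edge $w_1\cdots w_k$–$z$. In particular $H_{k,k}$ uses $r=k$. *)

theory Defs
  imports "HOL-Analysis.Analysis"
begin

definition esym :: "(nat \<Rightarrow> real) \<Rightarrow> nat \<Rightarrow> nat set \<Rightarrow> real" where
  "esym x k S = (\<Sum>T\<in>{T. T \<subseteq> S \<and> card T = k}. \<Prod>j\<in>T. x j)"

definition qsym :: "(nat \<Rightarrow> real) \<Rightarrow> nat \<Rightarrow> nat set \<Rightarrow> real" where
  "qsym x k S = esym x k S / esym x (k - 1) S"

definition partial :: "nat \<Rightarrow> ((nat \<Rightarrow> real) \<Rightarrow> real) \<Rightarrow> (nat \<Rightarrow> real) \<Rightarrow> real" where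
  "partial j f = (\<lambda>x. deriv (\<lambda>t. f (x(j := t))) (x j))"

definition partials :: "nat set \<Rightarrow> ((nat \<Rightarrow> real) \<Rightarrow> real) \<Rightarrow> (nat \<Rightarrow> real) \<Rightarrow> real" where
  "partials S f = foldr partial (sorted_list_of_set S) f"

text \<open>Spanning trees of a graph with vertex set V and edge set E (edges stored as
  oriented pairs, each undirected edge exactly once), and the spanning tree polynomial.\<close>
definition spanning_trees :: "'v set \<Rightarrow> ('v \<times> 'v) set \<Rightarrow> ('v \<times> 'v) set set" where
  "spanning_trees V E = {T. T \<subseteq> E \<and> card T = card V - 1 \<and>
      (\<forall>u\<in>V. \<forall>v\<in>V. (u, v) \<in> (T \<union> T\<inverse>)\<^sup>*)}"

definition tree_poly :: "'v set \<Rightarrow> ('v \<times> 'v) set \<Rightarrow> ('v \<Rightarrow> 'v \<Rightarrow> real) \<Rightarrow> real" where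
  "tree_poly V E w = (\<Sum>T\<in>spanning_trees V E. \<Prod>(u, v)\<in>T. w u v)"

datatype vtx = Sv | Zv | W "nat list"

definition words :: "nat \<Rightarrow> nat \<Rightarrow> nat list set" where
  "words n k = {w. distinct w \<and> 1 \<le> length w \<and> length w \<le> k \<and> set w \<subseteq> {1..n}}"

definition Gverts :: "nat \<Rightarrow> nat \<Rightarrow> vtx set" where
  "Gverts n k = {Sv, Zv} \<union> W ` words n k"

definition Gedges :: "nat \<Rightarrow> nat \<Rightarrow> (vtx \<times> vtx) set" where
  "Gedges n k =
     {(Sv, W [i]) | i. i \<in> {1..n}}
   \<union> {(W w, W (w @ [a])) | w a. w \<noteq> [] \<and> w @ [a] \<in> words n k}
   \<union> {(W w, Zv) | w. w \<in> words n k \<and> length w = k}"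

text \<open>Edge weights for H_{k,r}; an edge (u,v) is oriented from the shorter to the longer word.\<close>
definition Hwt :: "nat \<Rightarrow> nat \<Rightarrow> nat \<Rightarrow> (nat \<Rightarrow> real) \<Rightarrow> vtx \<Rightarrow> vtx \<Rightarrow> real" where
  "Hwt n k r x u v =
     (case (u, v) of
        (Sv, W [i]) \<Rightarrow> fact r * x i
      | (W w, W w') \<Rightarrow>
          (if w' \<noteq> [] \<and> butlast w' = w then fact (r - length w' + 1) * x (last w') else 0)
      | (W w, Zv) \<Rightarrow> fact (r - k + 1) * qsym x (r - k + 1) ({1..n} - set w)
      | _ \<Rightarrow> 0)"

definition H :: "nat \<Rightarrow> nat \<Rightarrow> nat \<Rightarrow> (nat \<Rightarrow> real) \<Rightarrow> real" where
  "H n k r x = tree_poly (Gverts n k) (Gedges n k) (Hwt n k r x)"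

end

theory Submission
  imports Defs
begin


abbreviation conn :: "('v \<times> 'v) set \<Rightarrow> ('v \<times> 'v) set" where
  "conn T \<equiv> (T \<union> T\<inverse>)\<^sup>*"

lemma conn_sym: "(x,y) \<in> conn T \<Longrightarrow> (y,x) \<in> conn T"
proof -
  assume "(x,y) \<in> conn T"
  hence "(y,x) \<in> ((T \<union> T\<inverse>)\<inverse>)\<^sup>*" by (simp add: rtrancl_converse)
  moreover have "(T \<union> T\<inverse>)\<inverse> = T \<union> T\<inverse>" by auto
  ultimately show ?thesis by simp
qed

lemma conn_trans: "(x,y) \<in> conn T \<Longrightarrow> (y,z) \<in> conn T \<Longrightarrow> (x,z) \<in> conn T"
  by (rule rtrancl_trans)

lemma conn_mono: "T \<subseteq> T' \<Longrightarrow> (x,y) \<in> conn T \<Longrightarrow> (x,y) \<in> conn T'"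
proof -
  assume "T \<subseteq> T'" "(x,y) \<in> conn T"
  moreover have "T \<union> T\<inverse> \<subseteq> T' \<union> T'\<inverse>" using \<open>T \<subseteq> T'\<close> by auto
  ultimately show ?thesis using rtrancl_mono by blast
qed

lemma count_lemma:
  assumes fin: "finite T" and cov: "\<forall>x\<in>V. \<exists>r\<in>R. (x,r) \<in> conn T"
  shows "card (V - R) \<le> card T"
proof -
  define S where "S = T \<union> T\<inverse>"
  define d where "d = (\<lambda>x. LEAST n. \<exists>r\<in>R. (x,r) \<in> S ^^ n)"
  have ex: "\<exists>n. \<exists>r\<in>R. (x,r) \<in> S ^^ n" if "x \<in> V" for x
    using cov that unfolding S_def by (meson rtrancl_power)
  have key: "\<exists>e\<in>T. \<exists>w. (e = (x,w) \<or> e = (w,x)) \<and> d w < d x" if "x \<in> V - R" for x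
  proof -
    from ex[of x] that obtain r where r: "r\<in>R" "(x,r) \<in> S ^^ d x"
      unfolding d_def using LeastI_ex[of "\<lambda>n. \<exists>r\<in>R. (x,r) \<in> S ^^ n"] by blast
    have "d x \<noteq> 0"
    proof
      assume "d x = 0"
      with r have "x = r" by simp
      with that r show False by auto
    qed
    then obtain p where p: "d x = Suc p" by (cases "d x") auto
    then obtain w where w: "(x,w) \<in> S" "(w,r) \<in> S ^^ p" using r relpow_Suc_D2 by metis
    have "d w \<le> p" unfolding d_def using w r by (intro Least_le) blast
    moreover have "(x,w) \<in> T \<or> (w,x) \<in> T" using w unfolding S_def by auto
    ultimately show ?thesis using p by (metis less_Suc_eq_le)
  qed
  define f where "f = (\<lambda>x. SOME e. e\<in>T \<and> (\<exists>w. (e = (x,w) \<or> e = (w,x)) \<and> d w < d x))"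
  have fP: "f x \<in> T \<and> (\<exists>w. (f x = (x,w) \<or> f x = (w,x)) \<and> d w < d x)" if "x \<in> V - R" for x
  proof -
    from key[OF that] have "\<exists>e. e\<in>T \<and> (\<exists>w. (e = (x,w) \<or> e = (w,x)) \<and> d w < d x)" by blast
    from someI_ex[OF this] show ?thesis unfolding f_def .
  qed
  have "inj_on f (V - R)"
  proof (rule inj_onI)
    fix x y assume xy: "x \<in> V - R" "y \<in> V - R" "f x = f y"
    show "x = y"
    proof (rule ccontr)
      assume ne: "x \<noteq> y"
      obtain w where w: "f x = (x,w) \<or> f x = (w,x)" "d w < d x" using fP[OF xy(1)] by blast
      obtain w' where w': "f y = (y,w') \<or> f y = (w',y)" "d w' < d y" using fP[OF xy(2)] by blast
      show False using w w' xy(3) ne by auto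
    qed
  qed
  moreover have "f ` (V - R) \<subseteq> T" using fP by blast
  ultimately show ?thesis using card_inj_on_le fin by blast
qed

lemma count1:
  assumes "finite V" "finite T" "a \<in> V" "\<forall>x\<in>V. (x,a) \<in> conn T"
  shows "card V \<le> card T + 1"
proof -
  have "card (V - {a}) \<le> card T" using count_lemma[of T V "{a}"] assms by auto
  thus ?thesis using assms by (simp add: card_Diff_singleton)
qed

lemma count2:
  assumes "finite V" "finite T" "a \<in> V" "b \<in> V" "\<forall>x\<in>V. (x,a) \<in> conn T \<or> (x,b) \<in> conn T"
  shows "card V \<le> card T + 2"
proof -
  have "card (V - {a,b}) \<le> card T" using count_lemma[of T V "{a,b}"] assms by auto
  moreover have "card (V - {a,b}) = card V - card {a,b}"
    using assms by (intro card_Diff_subset) auto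
  moreover have "card {a,b} \<le> 2" by (simp add: card_insert_le_m1)
  ultimately show ?thesis by linarith
qed

lemma path_lemma:
  assumes "(x,y) \<in> conn T" "x \<in> V1" "T \<subseteq> E1 \<union> E2" "E1 \<subseteq> V1 \<times> V1" "E2 \<subseteq> V2 \<times> V2"
    "V1 \<inter> V2 \<subseteq> C"
  shows "(y \<in> V1 \<and> (x,y) \<in> conn (T \<inter> E1)) \<or> (\<exists>c\<in>C. (x,c) \<in> conn (T \<inter> E1))"
  using assms(1)
proof (induction rule: rtrancl_induct)
  case base
  then show ?case using assms by auto
next
  case (step y z)
  show ?case
  proof (cases "\<exists>c\<in>C. (x,c) \<in> conn (T \<inter> E1)")
    case True then show ?thesis by blast
  next
    case False
    with step.IH have y: "y \<in> V1" "(x,y) \<in> conn (T \<inter> E1)" by auto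
    have "y \<notin> C" using False y by blast
    hence yV2: "y \<notin> V2" using y assms(6) by blast
    from step.hyps(2) have "(y,z) \<in> T \<or> (z,y) \<in> T" by auto
    hence "((y,z) \<in> T \<inter> E1 \<or> (z,y) \<in> T \<inter> E1)" using assms(3,5) yV2 by blast
    hence "z \<in> V1" "(y,z) \<in> (T \<inter> E1) \<union> (T \<inter> E1)\<inverse>" using assms(4) by auto
    thus ?thesis using y rtrancl_into_rtrancl by metis
  qed
qed

lemma conn_in_V:
  assumes "(x,y) \<in> conn T" "x \<in> V" "T \<subseteq> V \<times> V" shows "y \<in> V"
  using assms(1) by (induction rule: rtrancl_induct) (use assms in auto)



definition forests2 :: "'v set \<Rightarrow> ('v \<times> 'v) set \<Rightarrow> 'v \<Rightarrow> 'v \<Rightarrow> ('v \<times> 'v) set set" where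
  "forests2 V E a b = {T. T \<subseteq> E \<and> card T = card V - 2 \<and>
      (\<forall>x\<in>V. (x,a) \<in> conn T \<or> (x,b) \<in> conn T) \<and> (a,b) \<notin> conn T}"

lemma conn_step: "(x,y) \<in> conn T \<Longrightarrow> (y,z) \<in> T \<or> (z,y) \<in> T \<Longrightarrow> (x,z) \<in> conn T"
  by (meson UnI1 UnI2 converse_iff rtrancl_into_rtrancl)

lemma all_conn: "\<forall>x\<in>V. (x,a) \<in> conn T \<Longrightarrow> \<forall>u\<in>V. \<forall>v\<in>V. (u,v) \<in> conn T"
  by (meson conn_sym conn_trans)

lemma mk_tree: "T \<subseteq> E \<Longrightarrow> card T = card V - 1 \<Longrightarrow> \<forall>x\<in>V. (x,a) \<in> conn T \<Longrightarrow> T \<in> spanning_trees V E"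
  unfolding spanning_trees_def using all_conn[of V a T] by blast

lemma tree_conn: "T \<in> spanning_trees V E \<Longrightarrow> u \<in> V \<Longrightarrow> v \<in> V \<Longrightarrow> (u,v) \<in> conn T"
  unfolding spanning_trees_def by blast

lemma sep_half:
  assumes "T \<subseteq> E1 \<union> E2" "E1 \<subseteq> V1 \<times> V1" "E2 \<subseteq> V2 \<times> V2" "V1 \<inter> V2 = {a,b}"
    "y \<in> V1" "(a,y) \<in> conn (T \<inter> E1)" "(a,b) \<notin> conn (T \<inter> E1)"
    "(y,z) \<in> T \<or> (z,y) \<in> T"
  shows "(a,z) \<in> conn (T \<inter> E1) \<or> (a,z) \<in> conn (T \<inter> E2)"
proof (cases "(y,z) \<in> T \<inter> E1 \<or> (z,y) \<in> T \<inter> E1")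
  case True
  then show ?thesis using assms(6) conn_step[of a y "T \<inter> E1" z] by blast
next
  case False
  hence "(y,z) \<in> T \<inter> E2 \<or> (z,y) \<in> T \<inter> E2" using assms(1,8) by auto
  hence "y \<in> V2" using assms(3) by auto
  hence "y \<in> {a,b}" using assms(4,5) by auto
  moreover have "y \<noteq> b" using assms(6,7) by auto
  ultimately have "y = a" by auto
  hence "(a,y) \<in> conn (T \<inter> E2)" by simp
  moreover have "(y,z) \<in> T \<inter> E2 \<or> (z,y) \<in> T \<inter> E2" by fact
  ultimately show ?thesis using conn_step by metis
qed

lemma par_sep:
  assumes "T \<subseteq> E1 \<union> E2" "E1 \<subseteq> V1 \<times> V1" "E2 \<subseteq> V2 \<times> V2" "V1 \<inter> V2 = {a,b}"
    "(a,b) \<notin> conn (T \<inter> E1)" "(a,b) \<notin> conn (T \<inter> E2)"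
  shows "(a,b) \<notin> conn T"
proof
  assume "(a,b) \<in> conn T"
  have "(a,y) \<in> conn (T \<inter> E1) \<or> (a,y) \<in> conn (T \<inter> E2)" if "(a,y) \<in> conn T" for y
    using that
  proof (induction rule: rtrancl_induct)
    case base then show ?case by simp
  next
    case (step y z)
    have yz: "(y,z) \<in> T \<or> (z,y) \<in> T" using step.hyps(2) by auto
    have aV: "a \<in> V1" "a \<in> V2" using assms(4) by auto
    from step.IH show ?case
    proof
      assume h: "(a,y) \<in> conn (T \<inter> E1)"
      have "y \<in> V1" using conn_in_V[OF h aV(1)] assms(2) by auto
      then show ?thesis using sep_half[OF assms(1-4) _ h assms(5) yz] by auto
    next
      assume h: "(a,y) \<in> conn (T \<inter> E2)"
      have "y \<in> V2" using conn_in_V[OF h aV(2)] assms(3) by auto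
      have a1: "T \<subseteq> E2 \<union> E1" using assms(1) by auto
      have a4: "V2 \<inter> V1 = {a,b}" using assms(4) by auto
      show ?thesis using sep_half[OF a1 assms(3) assms(2) a4 \<open>y \<in> V2\<close> h assms(6) yz] by auto
    qed
  qed
  from this[OF \<open>(a,b) \<in> conn T\<close>] show False using assms(5,6) by auto
qed

locale par_setup =
  fixes V1 V2 :: "'v set" and E1 E2 :: "('v \<times> 'v) set" and a b :: 'v
  assumes fin1: "finite V1" and fin2: "finite V2"
    and sub1: "E1 \<subseteq> V1 \<times> V1" and sub2: "E2 \<subseteq> V2 \<times> V2"
    and int: "V1 \<inter> V2 = {a,b}" and ab: "a \<noteq> b" and disj: "E1 \<inter> E2 = {}"
begin

lemma finE1: "finite E1" using fin1 sub1 finite_subset by blast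
lemma finE2: "finite E2" using fin2 sub2 finite_subset by blast

lemma cardV: "card (V1 \<union> V2) = card V1 + card V2 - 2"
proof -
  have "card (V1 \<union> V2) + card (V1 \<inter> V2) = card V1 + card V2" using card_Un_Int fin1 fin2 by metis
  moreover have "card (V1 \<inter> V2) = 2" using int ab by simp
  ultimately show ?thesis by simp
qed

lemma card1: "card V1 \<ge> 2"
proof -
  have "{a,b} \<subseteq> V1" using int by auto
  hence "card {a,b} \<le> card V1" using fin1 card_mono by blast
  thus ?thesis using ab by simp
qed
lemma card2: "card V2 \<ge> 2"
proof -
  have "{a,b} \<subseteq> V2" using int by auto
  hence "card {a,b} \<le> card V2" using fin2 card_mono by blast
  thus ?thesis using ab by simp
qed

lemma cardT: assumes "T \<subseteq> E1 \<union> E2" shows "card T = card (T \<inter> E1) + card (T \<inter> E2)"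
proof -
  have "T = (T \<inter> E1) \<union> (T \<inter> E2)" using assms by auto
  moreover have "finite (T \<inter> E1)" "finite (T \<inter> E2)" using finE1 finE2 by auto
  moreover have "(T \<inter> E1) \<inter> (T \<inter> E2) = {}" using disj by auto
  ultimately show ?thesis by (metis card_Un_disjoint)
qed

lemma cover1:
  assumes "T \<subseteq> E1 \<union> E2" "x \<in> V1" "(x,c) \<in> conn T" "c \<in> {a,b}"
  shows "(x,a) \<in> conn (T \<inter> E1) \<or> (x,b) \<in> conn (T \<inter> E1)"
  using path_lemma[OF assms(3,2,1) sub1 sub2, of "{a,b}"] int assms(4) by auto

lemma cover2:
  assumes "T \<subseteq> E1 \<union> E2" "x \<in> V2" "(x,c) \<in> conn T" "c \<in> {a,b}"
  shows "(x,a) \<in> conn (T \<inter> E2) \<or> (x,b) \<in> conn (T \<inter> E2)"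
proof -
  have "T \<subseteq> E2 \<union> E1" using assms(1) by auto
  thus ?thesis using path_lemma[OF assms(3,2) _ sub2 sub1, of "{a,b}"] int assms(4) by auto
qed

lemma tree_char:
  assumes T: "T \<subseteq> E1 \<union> E2"
  shows "T \<in> spanning_trees (V1 \<union> V2) (E1 \<union> E2) \<longleftrightarrow>
    (T \<inter> E1 \<in> spanning_trees V1 E1 \<and> T \<inter> E2 \<in> forests2 V2 E2 a b) \<or>
    (T \<inter> E1 \<in> forests2 V1 E1 a b \<and> T \<inter> E2 \<in> spanning_trees V2 E2)"
proof
  assume h: "T \<in> spanning_trees (V1 \<union> V2) (E1 \<union> E2)"
  have cT: "card T = card V1 + card V2 - 3" using h cardV card1 card2 unfolding spanning_trees_def by auto
  have ct: "card T = card (T \<inter> E1) + card (T \<inter> E2)" using cardT T by auto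
  have aV1: "a \<in> V1" "b \<in> V1" "a \<in> V2" "b \<in> V2" using int by auto
  have cn: "(x,y) \<in> conn T" if "x \<in> V1 \<union> V2" "y \<in> V1 \<union> V2" for x y
    using h that unfolding spanning_trees_def by auto
  have cov1: "(x,a) \<in> conn (T \<inter> E1) \<or> (x,b) \<in> conn (T \<inter> E1)" if "x \<in> V1" for x
    using cover1[OF T that cn[of x a]] that aV1 by auto
  have cov2: "(x,a) \<in> conn (T \<inter> E2) \<or> (x,b) \<in> conn (T \<inter> E2)" if "x \<in> V2" for x
    using cover2[OF T that cn[of x a]] that aV1 by auto
  have c1: "card V1 \<le> card (T \<inter> E1) + 2" using count2[OF fin1 _ aV1(1,2)] cov1 finE1 by auto
  have c2: "card V2 \<le> card (T \<inter> E2) + 2" using count2[OF fin2 _ aV1(3,4)] cov2 finE2 by auto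
  have notboth: "\<not> ((a,b) \<in> conn (T \<inter> E1) \<and> (a,b) \<in> conn (T \<inter> E2))"
  proof
    assume hh: "(a,b) \<in> conn (T \<inter> E1) \<and> (a,b) \<in> conn (T \<inter> E2)"
    have "\<forall>x\<in>V1. (x,a) \<in> conn (T \<inter> E1)" using cov1 hh conn_sym conn_trans by metis
    hence "card V1 \<le> card (T \<inter> E1) + 1" using count1[OF fin1 _ aV1(1)] finE1 by auto
    moreover have "\<forall>x\<in>V2. (x,a) \<in> conn (T \<inter> E2)" using cov2 hh conn_sym conn_trans by metis
    hence "card V2 \<le> card (T \<inter> E2) + 1" using count1[OF fin2 _ aV1(3)] finE2 by auto
    ultimately show False using cT ct card1 card2 by linarith
  qed
  have one: "(a,b) \<in> conn (T \<inter> E1) \<or> (a,b) \<in> conn (T \<inter> E2)"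
    using par_sep[OF T sub1 sub2 int] cn[of a b] aV1 by auto
  show "(T \<inter> E1 \<in> spanning_trees V1 E1 \<and> T \<inter> E2 \<in> forests2 V2 E2 a b) \<or>
    (T \<inter> E1 \<in> forests2 V1 E1 a b \<and> T \<inter> E2 \<in> spanning_trees V2 E2)"
  proof (cases "(a,b) \<in> conn (T \<inter> E1)")
    case True
    have all1: "\<forall>x\<in>V1. (x,a) \<in> conn (T \<inter> E1)" using cov1 True conn_sym conn_trans by metis
    hence "card V1 \<le> card (T \<inter> E1) + 1" using count1[OF fin1 _ aV1(1)] finE1 by auto
    hence e1: "card (T \<inter> E1) = card V1 - 1" and e2: "card (T \<inter> E2) = card V2 - 2"
      using c2 cT ct card1 card2 by linarith+
    have "T \<inter> E1 \<in> spanning_trees V1 E1" by (rule mk_tree[OF _ e1 all1]) auto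
    moreover have "T \<inter> E2 \<in> forests2 V2 E2 a b"
    proof -
      have "(a,b) \<notin> conn (T \<inter> E2)" using True notboth by blast
      thus ?thesis using e2 cov2 unfolding forests2_def by auto
    qed
    ultimately show ?thesis by blast
  next
    case False
    hence True2: "(a,b) \<in> conn (T \<inter> E2)" using one by auto
    have all2: "\<forall>x\<in>V2. (x,a) \<in> conn (T \<inter> E2)" using cov2 True2 conn_sym conn_trans by metis
    hence "card V2 \<le> card (T \<inter> E2) + 1" using count1[OF fin2 _ aV1(3)] finE2 by auto
    hence e2: "card (T \<inter> E2) = card V2 - 1" and e1: "card (T \<inter> E1) = card V1 - 2"
      using c1 cT ct card1 card2 by linarith+
    have "T \<inter> E2 \<in> spanning_trees V2 E2" by (rule mk_tree[OF _ e2 all2]) auto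
    moreover have "T \<inter> E1 \<in> forests2 V1 E1 a b" unfolding forests2_def
      using e1 cov1 False by auto
    ultimately show ?thesis by blast
  qed
next
  assume h: "(T \<inter> E1 \<in> spanning_trees V1 E1 \<and> T \<inter> E2 \<in> forests2 V2 E2 a b) \<or>
    (T \<inter> E1 \<in> forests2 V1 E1 a b \<and> T \<inter> E2 \<in> spanning_trees V2 E2)"
  have ct: "card T = card (T \<inter> E1) + card (T \<inter> E2)" using cardT T by auto
  have aV1: "a \<in> V1" "b \<in> V1" "a \<in> V2" "b \<in> V2" using int by auto
  have s1: "T \<inter> E1 \<subseteq> T" "T \<inter> E2 \<subseteq> T" by auto
  have allA: "\<forall>x\<in>V1 \<union> V2. (x,a) \<in> conn T"
  proof
    fix x assume x: "x \<in> V1 \<union> V2"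
    from h show "(x,a) \<in> conn T"
    proof
      assume hh: "T \<inter> E1 \<in> spanning_trees V1 E1 \<and> T \<inter> E2 \<in> forests2 V2 E2 a b"
      have ba: "(b,a) \<in> conn T" using tree_conn[of "T \<inter> E1" V1 E1 b a] hh aV1 conn_mono[OF s1(1)] by blast
      show ?thesis
      proof (cases "x \<in> V1")
        case True then show ?thesis using tree_conn[of "T \<inter> E1" V1 E1 x a] hh aV1 conn_mono[OF s1(1)] by blast
      next
        case False
        hence "x \<in> V2" using x by auto
        hence "(x,a) \<in> conn (T \<inter> E2) \<or> (x,b) \<in> conn (T \<inter> E2)" using hh unfolding forests2_def by auto
        then show ?thesis using ba conn_mono[OF s1(2)] conn_trans by metis
      qed
    next
      assume hh: "T \<inter> E1 \<in> forests2 V1 E1 a b \<and> T \<inter> E2 \<in> spanning_trees V2 E2"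
      have ba: "(b,a) \<in> conn T" using tree_conn[of "T \<inter> E2" V2 E2 b a] hh aV1 conn_mono[OF s1(2)] by blast
      show ?thesis
      proof (cases "x \<in> V2")
        case True then show ?thesis using tree_conn[of "T \<inter> E2" V2 E2 x a] hh aV1 conn_mono[OF s1(2)] by blast
      next
        case False
        hence "x \<in> V1" using x by auto
        hence "(x,a) \<in> conn (T \<inter> E1) \<or> (x,b) \<in> conn (T \<inter> E1)" using hh unfolding forests2_def by auto
        then show ?thesis using ba conn_mono[OF s1(1)] conn_trans by metis
      qed
    qed
  qed
  have "card T = card (V1 \<union> V2) - 1"
    using h ct cardV card1 card2 unfolding spanning_trees_def forests2_def by auto
  then show "T \<in> spanning_trees (V1 \<union> V2) (E1 \<union> E2)" using mk_tree[OF T _ allA] by blast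
qed

lemma forest_char:
  assumes T: "T \<subseteq> E1 \<union> E2"
  shows "T \<in> forests2 (V1 \<union> V2) (E1 \<union> E2) a b \<longleftrightarrow>
    T \<inter> E1 \<in> forests2 V1 E1 a b \<and> T \<inter> E2 \<in> forests2 V2 E2 a b"
proof
  assume h: "T \<in> forests2 (V1 \<union> V2) (E1 \<union> E2) a b"
  have cT: "card T = card V1 + card V2 - 4" using h cardV card1 card2 unfolding forests2_def by auto
  have ct: "card T = card (T \<inter> E1) + card (T \<inter> E2)" using cardT T by auto
  have aV1: "a \<in> V1" "b \<in> V1" "a \<in> V2" "b \<in> V2" using int by auto
  have cv: "(x,a) \<in> conn T \<or> (x,b) \<in> conn T" if "x \<in> V1 \<union> V2" for x
    using h that unfolding forests2_def by auto
  have cov1: "(x,a) \<in> conn (T \<inter> E1) \<or> (x,b) \<in> conn (T \<inter> E1)" if "x \<in> V1" for x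
    using cover1[OF T that] cv[of x] that by blast
  have cov2: "(x,a) \<in> conn (T \<inter> E2) \<or> (x,b) \<in> conn (T \<inter> E2)" if "x \<in> V2" for x
    using cover2[OF T that] cv[of x] that by blast
  have c1: "card V1 \<le> card (T \<inter> E1) + 2" using count2[OF fin1 _ aV1(1,2)] cov1 finE1 by auto
  have c2: "card V2 \<le> card (T \<inter> E2) + 2" using count2[OF fin2 _ aV1(3,4)] cov2 finE2 by auto
  have e1: "card (T \<inter> E1) = card V1 - 2" and e2: "card (T \<inter> E2) = card V2 - 2"
    using c1 c2 cT ct card1 card2 by linarith+
  have nab: "(a,b) \<notin> conn T" using h unfolding forests2_def by auto
  have n1: "(a,b) \<notin> conn (T \<inter> E1)" using nab conn_mono[of "T \<inter> E1" T] by blast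
  have n2: "(a,b) \<notin> conn (T \<inter> E2)" using nab conn_mono[of "T \<inter> E2" T] by blast
  show "T \<inter> E1 \<in> forests2 V1 E1 a b \<and> T \<inter> E2 \<in> forests2 V2 E2 a b"
    unfolding forests2_def using e1 e2 cov1 cov2 n1 n2 by auto
next
  assume h: "T \<inter> E1 \<in> forests2 V1 E1 a b \<and> T \<inter> E2 \<in> forests2 V2 E2 a b"
  have ct: "card T = card (T \<inter> E1) + card (T \<inter> E2)" using cardT T by auto
  have s1: "T \<inter> E1 \<subseteq> T" "T \<inter> E2 \<subseteq> T" by auto
  have cv: "(x,a) \<in> conn T \<or> (x,b) \<in> conn T" if "x \<in> V1 \<union> V2" for x
  proof (cases "x \<in> V1")
    case True then show ?thesis using h conn_mono[OF s1(1)] unfolding forests2_def by auto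
  next
    case False then show ?thesis using that h conn_mono[OF s1(2)] unfolding forests2_def by auto
  qed
  have "(a,b) \<notin> conn T" using par_sep[OF T sub1 sub2 int] h unfolding forests2_def by auto
  moreover have "card T = card (V1 \<union> V2) - 2"
    using h ct cardV card1 card2 unfolding forests2_def by auto
  ultimately show "T \<in> forests2 (V1 \<union> V2) (E1 \<union> E2) a b" unfolding forests2_def
    using T cv by auto
qed

end



locale ser_setup =
  fixes V1 V2 :: "'v set" and E1 E2 :: "('v \<times> 'v) set" and a m b :: 'v
  assumes fin1: "finite V1" and fin2: "finite V2"
    and sub1: "E1 \<subseteq> V1 \<times> V1" and sub2: "E2 \<subseteq> V2 \<times> V2"
    and int: "V1 \<inter> V2 = {m}" and aV: "a \<in> V1" and bV: "b \<in> V2" and am: "a \<noteq> m" and bm: "b \<noteq> m"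
    and disj: "E1 \<inter> E2 = {}"
begin

lemma finE1: "finite E1" using fin1 sub1 finite_subset by blast
lemma finE2: "finite E2" using fin2 sub2 finite_subset by blast
lemma mV: "m \<in> V1" "m \<in> V2" using int by auto
lemma aV2: "a \<notin> V2" using int aV am by auto
lemma bV1: "b \<notin> V1" using int bV bm by auto

lemma cardV: "card (V1 \<union> V2) = card V1 + card V2 - 1"
proof -
  have "card (V1 \<union> V2) + card (V1 \<inter> V2) = card V1 + card V2" using card_Un_Int fin1 fin2 by metis
  moreover have "card (V1 \<inter> V2) = 1" using int by simp
  ultimately show ?thesis by simp
qed

lemma card1: "card V1 \<ge> 2"
proof -
  have "{a,m} \<subseteq> V1" using aV mV by auto
  hence "card {a,m} \<le> card V1" using fin1 card_mono by blast
  thus ?thesis using am by simp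
qed
lemma card2: "card V2 \<ge> 2"
proof -
  have "{b,m} \<subseteq> V2" using bV mV by auto
  hence "card {b,m} \<le> card V2" using fin2 card_mono by blast
  thus ?thesis using bm by simp
qed

lemma cardT: assumes "T \<subseteq> E1 \<union> E2" shows "card T = card (T \<inter> E1) + card (T \<inter> E2)"
proof -
  have "T = (T \<inter> E1) \<union> (T \<inter> E2)" using assms by auto
  moreover have "finite (T \<inter> E1)" "finite (T \<inter> E2)" using finE1 finE2 by auto
  moreover have "(T \<inter> E1) \<inter> (T \<inter> E2) = {}" using disj by auto
  ultimately show ?thesis by (metis card_Un_disjoint)
qed

lemma path1:
  assumes "T \<subseteq> E1 \<union> E2" "x \<in> V1" "(x,y) \<in> conn T"
  shows "(y \<in> V1 \<and> (x,y) \<in> conn (T \<inter> E1)) \<or> (x,m) \<in> conn (T \<inter> E1)"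
  using path_lemma[OF assms(3,2,1) sub1 sub2, of "{m}"] int by auto

lemma path2:
  assumes "T \<subseteq> E1 \<union> E2" "x \<in> V2" "(x,y) \<in> conn T"
  shows "(y \<in> V2 \<and> (x,y) \<in> conn (T \<inter> E2)) \<or> (x,m) \<in> conn (T \<inter> E2)"
proof -
  have "T \<subseteq> E2 \<union> E1" using assms(1) by auto
  thus ?thesis using path_lemma[OF assms(3,2) _ sub2 sub1, of "{m}"] int by auto
qed

lemma tree_char:
  assumes T: "T \<subseteq> E1 \<union> E2"
  shows "T \<in> spanning_trees (V1 \<union> V2) (E1 \<union> E2) \<longleftrightarrow>
    T \<inter> E1 \<in> spanning_trees V1 E1 \<and> T \<inter> E2 \<in> spanning_trees V2 E2"
proof
  assume h: "T \<in> spanning_trees (V1 \<union> V2) (E1 \<union> E2)"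
  have cT: "card T = card V1 + card V2 - 2" using h cardV card1 card2 unfolding spanning_trees_def by auto
  have ct: "card T = card (T \<inter> E1) + card (T \<inter> E2)" using cardT T by auto
  have cov1: "(x,m) \<in> conn (T \<inter> E1)" if "x \<in> V1" for x
    using path1[OF T that tree_conn[OF h, of x m]] that mV by auto
  have cov2: "(x,m) \<in> conn (T \<inter> E2)" if "x \<in> V2" for x
    using path2[OF T that tree_conn[OF h, of x m]] that mV by auto
  have c1: "card V1 \<le> card (T \<inter> E1) + 1" using count1[OF fin1 _ mV(1)] cov1 finE1 by auto
  have c2: "card V2 \<le> card (T \<inter> E2) + 1" using count1[OF fin2 _ mV(2)] cov2 finE2 by auto
  have e1: "card (T \<inter> E1) = card V1 - 1" and e2: "card (T \<inter> E2) = card V2 - 1"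
    using c1 c2 cT ct card1 card2 by linarith+
  show "T \<inter> E1 \<in> spanning_trees V1 E1 \<and> T \<inter> E2 \<in> spanning_trees V2 E2"
    using mk_tree[OF _ e1, of E1 m] mk_tree[OF _ e2, of E2 m] cov1 cov2 by blast
next
  assume h: "T \<inter> E1 \<in> spanning_trees V1 E1 \<and> T \<inter> E2 \<in> spanning_trees V2 E2"
  have ct: "card T = card (T \<inter> E1) + card (T \<inter> E2)" using cardT T by auto
  have s1: "T \<inter> E1 \<subseteq> T" "T \<inter> E2 \<subseteq> T" by auto
  have allm: "\<forall>x\<in>V1 \<union> V2. (x,m) \<in> conn T"
  proof
    fix x assume "x \<in> V1 \<union> V2"
    then show "(x,m) \<in> conn T"
    proof
      assume "x \<in> V1" thus ?thesis using tree_conn[of "T \<inter> E1" V1 E1 x m] h mV conn_mono[OF s1(1)] by blast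
    next
      assume "x \<in> V2" thus ?thesis using tree_conn[of "T \<inter> E2" V2 E2 x m] h mV conn_mono[OF s1(2)] by blast
    qed
  qed
  have "card T = card (V1 \<union> V2) - 1"
    using h ct cardV card1 card2 unfolding spanning_trees_def by auto
  then show "T \<in> spanning_trees (V1 \<union> V2) (E1 \<union> E2)" using mk_tree[OF T _ allm] by blast
qed

lemma forest_char:
  assumes T: "T \<subseteq> E1 \<union> E2"
  shows "T \<in> forests2 (V1 \<union> V2) (E1 \<union> E2) a b \<longleftrightarrow>
    (T \<inter> E1 \<in> spanning_trees V1 E1 \<and> T \<inter> E2 \<in> forests2 V2 E2 m b) \<or>
    (T \<inter> E1 \<in> forests2 V1 E1 a m \<and> T \<inter> E2 \<in> spanning_trees V2 E2)"
proof
  assume h: "T \<in> forests2 (V1 \<union> V2) (E1 \<union> E2) a b"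
  have cT: "card T = card V1 + card V2 - 3" using h cardV card1 card2 unfolding forests2_def by auto
  have ct: "card T = card (T \<inter> E1) + card (T \<inter> E2)" using cardT T by auto
  have cv: "(x,a) \<in> conn T \<or> (x,b) \<in> conn T" if "x \<in> V1 \<union> V2" for x
    using h that unfolding forests2_def by auto
  have nab: "(a,b) \<notin> conn T" using h unfolding forests2_def by auto
  have s1: "T \<inter> E1 \<subseteq> T" "T \<inter> E2 \<subseteq> T" by auto
  have cov1: "(x,a) \<in> conn (T \<inter> E1) \<or> (x,m) \<in> conn (T \<inter> E1)" if "x \<in> V1" for x
  proof -
    have "(x,a) \<in> conn T \<or> (x,b) \<in> conn T" using cv that by auto
    thus ?thesis
    proof
      assume "(x,a) \<in> conn T" thus ?thesis using path1[OF T that] by blast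
    next
      assume "(x,b) \<in> conn T" thus ?thesis using path1[OF T that] bV1 by blast
    qed
  qed
  have cov2: "(x,b) \<in> conn (T \<inter> E2) \<or> (x,m) \<in> conn (T \<inter> E2)" if "x \<in> V2" for x
  proof -
    have "(x,a) \<in> conn T \<or> (x,b) \<in> conn T" using cv that by auto
    thus ?thesis
    proof
      assume "(x,a) \<in> conn T" thus ?thesis using path2[OF T that] aV2 by blast
    next
      assume "(x,b) \<in> conn T" thus ?thesis using path2[OF T that] by blast
    qed
  qed
  have c1: "card V1 \<le> card (T \<inter> E1) + 2" using count2[OF fin1 _ aV mV(1)] cov1 finE1 by auto
  have c2: "card V2 \<le> card (T \<inter> E2) + 2" using count2[OF fin2 _ bV mV(2)] cov2 finE2 by auto
  have notboth: "\<not> ((a,m) \<in> conn (T \<inter> E1) \<and> (m,b) \<in> conn (T \<inter> E2))"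
  proof
    assume "(a,m) \<in> conn (T \<inter> E1) \<and> (m,b) \<in> conn (T \<inter> E2)"
    hence "(a,m) \<in> conn T" "(m,b) \<in> conn T" using conn_mono[OF s1(1)] conn_mono[OF s1(2)] by auto
    hence "(a,b) \<in> conn T" using conn_trans by metis
    thus False using nab by auto
  qed
  show "(T \<inter> E1 \<in> spanning_trees V1 E1 \<and> T \<inter> E2 \<in> forests2 V2 E2 m b) \<or>
    (T \<inter> E1 \<in> forests2 V1 E1 a m \<and> T \<inter> E2 \<in> spanning_trees V2 E2)"
  proof (cases "(a,m) \<in> conn (T \<inter> E1)")
    case True
    have all1: "\<forall>x\<in>V1. (x,m) \<in> conn (T \<inter> E1)" using cov1 True conn_trans by metis
    hence "card V1 \<le> card (T \<inter> E1) + 1" using count1[OF fin1 _ mV(1)] finE1 by auto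
    hence e1: "card (T \<inter> E1) = card V1 - 1" and e2: "card (T \<inter> E2) = card V2 - 2"
      using c2 cT ct card1 card2 by linarith+
    have "T \<inter> E1 \<in> spanning_trees V1 E1" by (rule mk_tree[OF _ e1 all1]) auto
    moreover have "T \<inter> E2 \<in> forests2 V2 E2 m b"
    proof -
      have "(m,b) \<notin> conn (T \<inter> E2)" using True notboth by blast
      moreover have "\<forall>x\<in>V2. (x,m) \<in> conn (T \<inter> E2) \<or> (x,b) \<in> conn (T \<inter> E2)" using cov2 by blast
      ultimately show ?thesis using e2 unfolding forests2_def by auto
    qed
    ultimately show ?thesis by blast
  next
    case False
    have True2: "(m,b) \<in> conn (T \<inter> E2)"
    proof (rule ccontr)
      assume nmb: "(m,b) \<notin> conn (T \<inter> E2)"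
      have "(m,a) \<in> conn T \<or> (m,b) \<in> conn T" using cv mV by auto
      thus False
      proof
        assume "(m,a) \<in> conn T"
        hence "(a,m) \<in> conn T" by (rule conn_sym)
        thus False using path1[OF T aV] False by blast
      next
        assume "(m,b) \<in> conn T"
        hence "(b,m) \<in> conn T" by (rule conn_sym)
        hence "(b,m) \<in> conn (T \<inter> E2)" using path2[OF T bV] by blast
        thus False using nmb conn_sym by metis
      qed
    qed
    have all2: "\<forall>x\<in>V2. (x,m) \<in> conn (T \<inter> E2)" using cov2 True2 conn_sym conn_trans by metis
    hence "card V2 \<le> card (T \<inter> E2) + 1" using count1[OF fin2 _ mV(2)] finE2 by auto
    hence e2: "card (T \<inter> E2) = card V2 - 1" and e1: "card (T \<inter> E1) = card V1 - 2"
      using c1 cT ct card1 card2 by linarith+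
    have "T \<inter> E2 \<in> spanning_trees V2 E2" by (rule mk_tree[OF _ e2 all2]) auto
    moreover have "T \<inter> E1 \<in> forests2 V1 E1 a m"
    proof -
      have "\<forall>x\<in>V1. (x,a) \<in> conn (T \<inter> E1) \<or> (x,m) \<in> conn (T \<inter> E1)" using cov1 by blast
      thus ?thesis using e1 False unfolding forests2_def by auto
    qed
    ultimately show ?thesis by blast
  qed
next
  assume h: "(T \<inter> E1 \<in> spanning_trees V1 E1 \<and> T \<inter> E2 \<in> forests2 V2 E2 m b) \<or>
    (T \<inter> E1 \<in> forests2 V1 E1 a m \<and> T \<inter> E2 \<in> spanning_trees V2 E2)"
  have ct: "card T = card (T \<inter> E1) + card (T \<inter> E2)" using cardT T by auto
  have s1: "T \<inter> E1 \<subseteq> T" "T \<inter> E2 \<subseteq> T" by auto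
  have cd: "card T = card (V1 \<union> V2) - 2"
    using h ct cardV card1 card2 unfolding spanning_trees_def forests2_def by auto
  from h show "T \<in> forests2 (V1 \<union> V2) (E1 \<union> E2) a b"
  proof
    assume hh: "T \<inter> E1 \<in> spanning_trees V1 E1 \<and> T \<inter> E2 \<in> forests2 V2 E2 m b"
    have ma: "(m,a) \<in> conn T" using tree_conn[of "T \<inter> E1" V1 E1 m a] hh mV aV conn_mono[OF s1(1)] by blast
    have cv: "(x,a) \<in> conn T \<or> (x,b) \<in> conn T" if "x \<in> V1 \<union> V2" for x
    proof (cases "x \<in> V1")
      case True then show ?thesis using tree_conn[of "T \<inter> E1" V1 E1 x a] hh aV conn_mono[OF s1(1)] by blast
    next
      case False
      hence "x \<in> V2" using that by auto
      hence "(x,m) \<in> conn (T \<inter> E2) \<or> (x,b) \<in> conn (T \<inter> E2)" using hh unfolding forests2_def by auto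
      then show ?thesis using ma conn_mono[OF s1(2)] conn_trans by metis
    qed
    have "(a,b) \<notin> conn T"
    proof
      assume "(a,b) \<in> conn T"
      hence "(b,a) \<in> conn T" by (rule conn_sym)
      hence "(b,m) \<in> conn (T \<inter> E2)" using path2[OF T bV] aV2 by blast
      hence "(m,b) \<in> conn (T \<inter> E2)" by (rule conn_sym)
      thus False using hh unfolding forests2_def by auto
    qed
    thus ?thesis using cd cv T unfolding forests2_def by auto
  next
    assume hh: "T \<inter> E1 \<in> forests2 V1 E1 a m \<and> T \<inter> E2 \<in> spanning_trees V2 E2"
    have mb: "(m,b) \<in> conn T" using tree_conn[of "T \<inter> E2" V2 E2 m b] hh mV bV conn_mono[OF s1(2)] by blast
    have cv: "(x,a) \<in> conn T \<or> (x,b) \<in> conn T" if "x \<in> V1 \<union> V2" for x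
    proof (cases "x \<in> V2")
      case True then show ?thesis using tree_conn[of "T \<inter> E2" V2 E2 x b] hh bV conn_mono[OF s1(2)] by blast
    next
      case False
      hence "x \<in> V1" using that by auto
      hence "(x,a) \<in> conn (T \<inter> E1) \<or> (x,m) \<in> conn (T \<inter> E1)" using hh unfolding forests2_def by auto
      then show ?thesis using mb conn_mono[OF s1(1)] conn_trans by metis
    qed
    have "(a,b) \<notin> conn T"
    proof
      assume "(a,b) \<in> conn T"
      hence "(a,m) \<in> conn (T \<inter> E1)" using path1[OF T aV] bV1 by blast
      thus False using hh unfolding forests2_def by auto
    qed
    thus ?thesis using cd cv T unfolding forests2_def by auto
  qed
qed

end



lemma st_mem: "T \<in> spanning_trees V E \<longleftrightarrow> T \<subseteq> E \<and> card T = card V - 1 \<and> (\<forall>u\<in>V. \<forall>v\<in>V. (u,v) \<in> conn T)"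
  unfolding spanning_trees_def by (rule mem_Collect_eq)

lemma f2_mem: "T \<in> forests2 V E a b \<longleftrightarrow> T \<subseteq> E \<and> card T = card V - 2 \<and>
      (\<forall>x\<in>V. (x,a) \<in> conn T \<or> (x,b) \<in> conn T) \<and> (a,b) \<notin> conn T"
  unfolding forests2_def by (rule mem_Collect_eq)

lemma st_card: "T \<in> spanning_trees V E \<Longrightarrow> card T = card V - 1" unfolding st_mem by (elim conjE)
lemma st_subE: "T \<in> spanning_trees V E \<Longrightarrow> T \<subseteq> E" unfolding st_mem by (elim conjE)
lemma f2_card: "T \<in> forests2 V E a b \<Longrightarrow> card T = card V - 2" unfolding f2_mem by (elim conjE)
lemma f2_subE: "T \<in> forests2 V E a b \<Longrightarrow> T \<subseteq> E" unfolding f2_mem by (elim conjE)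

lemma edge_trees: assumes "a \<noteq> b" shows "spanning_trees {a,b} {(a,b)} = {{(a,b)}}"
proof -
  have "T \<in> spanning_trees {a,b} {(a,b)} \<longleftrightarrow> T = {(a,b)}" for T
  proof
    assume h: "T \<in> spanning_trees {a,b} {(a,b)}"
    have "T \<subseteq> {(a,b)}" using st_subE[OF h] .
    moreover have "card T = Suc 0" using st_card[OF h] assms by simp
    ultimately show "T = {(a,b)}" using subset_singletonD[of T "(a,b)"] by auto
  next
    assume T: "T = {(a,b)}"
    have "(b,a) \<in> conn {(a,b)}" by (rule r_into_rtrancl) simp
    moreover have "(a,a) \<in> conn {(a,b)}" by (rule rtrancl_refl)
    ultimately have "\<forall>x\<in>{a,b}. (x,a) \<in> conn {(a,b)}" by simp
    moreover have "card {(a,b)} = card {a,b} - 1" using assms by simp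
    ultimately show "T \<in> spanning_trees {a,b} {(a,b)}" using mk_tree[of "{(a,b)}" "{(a,b)}" "{a,b}" a] T by simp
  qed
  thus ?thesis by blast
qed

lemma conn_empty: "conn {} = Id" by simp

lemma empty_f2:
  fixes a b :: 'v
  assumes "a \<noteq> b" "E = {} \<or> E = {(a,b)}"
  shows "{} \<in> forests2 {a,b} E a b"
proof -
  have c: "conn ({}::('v\<times>'v) set) = Id" by simp
  have "(a,b) \<notin> conn ({}::('v\<times>'v) set)" unfolding c using assms by simp
  moreover have "\<forall>x\<in>{a,b}. (x,a) \<in> conn ({}::('v\<times>'v) set) \<or> (x,b) \<in> conn ({}::('v\<times>'v) set)"
    unfolding c by simp
  moreover have "card ({}::('v\<times>'v) set) = card {a,b} - 2" using assms by simp
  ultimately show ?thesis unfolding f2_mem by simp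
qed

lemma edge_forests: assumes "a \<noteq> b" shows "forests2 {a,b} {(a,b)} a b = {{}}"
proof -
  have "T \<in> forests2 {a,b} {(a,b)} a b \<longleftrightarrow> T = {}" for T
  proof
    assume h: "T \<in> forests2 {a,b} {(a,b)} a b"
    have "T \<subseteq> {(a,b)}" using f2_subE[OF h] .
    moreover have "card T = 0" using f2_card[OF h] assms by simp
    moreover have "finite T" using \<open>T \<subseteq> {(a,b)}\<close> finite_subset by blast
    ultimately show "T = {}" by simp
  next
    assume T: "T = {}"
    show "T \<in> forests2 {a,b} {(a,b)} a b" unfolding T using empty_f2[OF assms] by simp
  qed
  thus ?thesis by blast
qed

lemma empty_trees: fixes a b :: 'v assumes "a \<noteq> b" shows "spanning_trees {a,b} {} = ({} :: ('v\<times>'v) set set)"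
proof -
  have "T \<notin> spanning_trees {a,b} {}" for T :: "('v\<times>'v) set"
  proof
    assume h: "T \<in> spanning_trees {a,b} {}"
    hence "T \<subseteq> {}" by (rule st_subE)
    hence "T = {}" by simp
    moreover have "card T = 1" using st_card[OF h] assms by simp
    ultimately show False by simp
  qed
  thus ?thesis by blast
qed

lemma empty_forests: fixes a b :: 'v assumes "a \<noteq> b" shows "forests2 {a,b} {} a b = {{}}"
proof -
  have "T \<in> forests2 {a,b} {} a b \<longleftrightarrow> T = {}" for T :: "('v\<times>'v) set"
  proof
    assume "T \<in> forests2 {a,b} {} a b"
    hence "T \<subseteq> {}" by (rule f2_subE)
    thus "T = {}" by simp
  next
    assume T: "T = {}"
    show "T \<in> forests2 {a,b} {} a b" unfolding T using empty_f2[OF assms] by simp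
  qed
  thus ?thesis by blast
qed


lemma sum_split:
  fixes f :: "'e \<Rightarrow> real"
  assumes "finite E1" "finite E2" "E1 \<inter> E2 = {}" "A \<subseteq> Pow E1" "B \<subseteq> Pow E2"
  shows "(\<Sum>T\<in>{T. T \<subseteq> E1 \<union> E2 \<and> T \<inter> E1 \<in> A \<and> T \<inter> E2 \<in> B}. prod f T) =
     (\<Sum>T\<in>A. prod f T) * (\<Sum>T\<in>B. prod f T)"
proof -
  have eq: "{T. T \<subseteq> E1 \<union> E2 \<and> T \<inter> E1 \<in> A \<and> T \<inter> E2 \<in> B} = (\<lambda>(X,Y). X \<union> Y) ` (A \<times> B)"
  proof (rule set_eqI, rule iffI)
    fix T assume "T \<in> {T. T \<subseteq> E1 \<union> E2 \<and> T \<inter> E1 \<in> A \<and> T \<inter> E2 \<in> B}"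
    hence "T = (T \<inter> E1) \<union> (T \<inter> E2)" "(T \<inter> E1, T \<inter> E2) \<in> A \<times> B" by auto
    thus "T \<in> (\<lambda>(X,Y). X \<union> Y) ` (A \<times> B)" by (metis (no_types, lifting) case_prod_conv image_eqI)
  next
    fix T assume "T \<in> (\<lambda>(X,Y). X \<union> Y) ` (A \<times> B)"
    then obtain X Y where "X \<in> A" "Y \<in> B" "T = X \<union> Y" by auto
    moreover have "X \<subseteq> E1" "Y \<subseteq> E2" using calculation assms by auto
    moreover have "T \<inter> E1 = X" "T \<inter> E2 = Y" using calculation assms(3) by auto
    ultimately show "T \<in> {T. T \<subseteq> E1 \<union> E2 \<and> T \<inter> E1 \<in> A \<and> T \<inter> E2 \<in> B}" by auto
  qed
  have inj: "inj_on (\<lambda>(X,Y). X \<union> Y) (A \<times> B)"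
  proof (rule inj_onI, clarify)
    fix X Y X' Y' assume h: "X \<in> A" "Y \<in> B" "X' \<in> A" "Y' \<in> B" "X \<union> Y = X' \<union> Y'"
    hence "X \<subseteq> E1" "Y \<subseteq> E2" "X' \<subseteq> E1" "Y' \<subseteq> E2" using assms by auto
    hence "(X \<union> Y) \<inter> E1 = X" "(X' \<union> Y') \<inter> E1 = X'" "(X \<union> Y) \<inter> E2 = Y" "(X' \<union> Y') \<inter> E2 = Y'"
      using assms(3) by auto
    thus "X = X' \<and> Y = Y'" using h(5) by metis
  qed
  have finA: "finite A" "finite B" using assms finite_subset by (metis finite_Pow_iff)+
  have "(\<Sum>T\<in>{T. T \<subseteq> E1 \<union> E2 \<and> T \<inter> E1 \<in> A \<and> T \<inter> E2 \<in> B}. prod f T) =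
        (\<Sum>p\<in>A \<times> B. prod f ((\<lambda>(X,Y). X \<union> Y) p))"
    unfolding eq by (rule sum.reindex[OF inj, unfolded comp_def])
  also have "\<dots> = (\<Sum>p\<in>A \<times> B. prod f (fst p) * prod f (snd p))"
  proof (rule sum.cong[OF refl])
    fix p assume "p \<in> A \<times> B"
    then obtain X Y where p: "p = (X,Y)" "X \<in> A" "Y \<in> B" by auto
    hence "X \<subseteq> E1" "Y \<subseteq> E2" using assms by auto
    hence "finite X" "finite Y" "X \<inter> Y = {}" using assms(1,2,3) by (auto intro: finite_subset)
    thus "prod f ((\<lambda>(X,Y). X \<union> Y) p) = prod f (fst p) * prod f (snd p)"
      using p by (simp add: prod.union_disjoint)
  qed
  also have "\<dots> = (\<Sum>X\<in>A. \<Sum>Y\<in>B. prod f X * prod f Y)"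
    by (simp add: sum.cartesian_product case_prod_beta)
  also have "\<dots> = (\<Sum>T\<in>A. prod f T) * (\<Sum>T\<in>B. prod f T)"
    by (simp add: sum_product)
  finally show ?thesis .
qed



definition fpoly :: "'v set \<Rightarrow> ('v \<times> 'v) set \<Rightarrow> 'v \<Rightarrow> 'v \<Rightarrow> ('v \<Rightarrow> 'v \<Rightarrow> real) \<Rightarrow> real" where
  "fpoly V E a b w = (\<Sum>T\<in>forests2 V E a b. \<Prod>(u, v)\<in>T. w u v)"

lemma st_sub: "spanning_trees V E \<subseteq> Pow E" unfolding spanning_trees_def by auto
lemma f2_sub: "forests2 V E a b \<subseteq> Pow E" unfolding forests2_def by auto

context par_setup begin

lemma par_poly:
  "tree_poly (V1 \<union> V2) (E1 \<union> E2) w = tree_poly V1 E1 w * fpoly V2 E2 a b w + fpoly V1 E1 a b w * tree_poly V2 E2 w"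
  "fpoly (V1 \<union> V2) (E1 \<union> E2) a b w = fpoly V1 E1 a b w * fpoly V2 E2 a b w"
proof -
  define X where "X = {T. T \<subseteq> E1 \<union> E2 \<and> T \<inter> E1 \<in> spanning_trees V1 E1 \<and> T \<inter> E2 \<in> forests2 V2 E2 a b}"
  define Y where "Y = {T. T \<subseteq> E1 \<union> E2 \<and> T \<inter> E1 \<in> forests2 V1 E1 a b \<and> T \<inter> E2 \<in> spanning_trees V2 E2}"
  have eq: "spanning_trees (V1 \<union> V2) (E1 \<union> E2) = X \<union> Y"
  proof (rule set_eqI)
    fix T show "T \<in> spanning_trees (V1 \<union> V2) (E1 \<union> E2) \<longleftrightarrow> T \<in> X \<union> Y"
    proof (cases "T \<subseteq> E1 \<union> E2")
      case True thus ?thesis using tree_char[OF True] unfolding X_def Y_def by simp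
    next
      case False thus ?thesis using st_sub[of "V1 \<union> V2" "E1 \<union> E2"] unfolding X_def Y_def by auto
    qed
  qed
  have dj: "X \<inter> Y = {}"
  proof -
    have nb: "T \<in> spanning_trees V1 E1 \<Longrightarrow> T \<in> forests2 V1 E1 a b \<Longrightarrow> False" for T
    proof -
      assume h1: "T \<in> spanning_trees V1 E1" and h2: "T \<in> forests2 V1 E1 a b"
      have "card T = card V1 - 1" by (rule st_card[OF h1])
      moreover have "card T = card V1 - 2" by (rule f2_card[OF h2])
      ultimately show False using card1 by linarith
    qed
    show ?thesis
    proof (rule ccontr)
      assume "X \<inter> Y \<noteq> {}"
      then obtain T where "T \<in> X" "T \<in> Y" by blast
      hence "T \<inter> E1 \<in> spanning_trees V1 E1" "T \<inter> E1 \<in> forests2 V1 E1 a b" unfolding X_def Y_def by simp_all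
      thus False using nb by blast
    qed
  qed
  have fE: "finite (E1 \<union> E2)" using finE1 finE2 by auto
  have "X \<subseteq> Pow (E1 \<union> E2)" "Y \<subseteq> Pow (E1 \<union> E2)" unfolding X_def Y_def by auto
  hence fX: "finite X" "finite Y" using fE by (meson finite_Pow_iff finite_subset)+
  show "tree_poly (V1 \<union> V2) (E1 \<union> E2) w = tree_poly V1 E1 w * fpoly V2 E2 a b w + fpoly V1 E1 a b w * tree_poly V2 E2 w"
  proof -
    have sX: "(\<Sum>T\<in>X. \<Prod>(u, v)\<in>T. w u v) = (\<Sum>T\<in>spanning_trees V1 E1. \<Prod>(u, v)\<in>T. w u v) * (\<Sum>T\<in>forests2 V2 E2 a b. \<Prod>(u, v)\<in>T. w u v)"
      unfolding X_def by (rule sum_split[OF finE1 finE2 disj st_sub f2_sub])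
    have sY: "(\<Sum>T\<in>Y. \<Prod>(u, v)\<in>T. w u v) = (\<Sum>T\<in>forests2 V1 E1 a b. \<Prod>(u, v)\<in>T. w u v) * (\<Sum>T\<in>spanning_trees V2 E2. \<Prod>(u, v)\<in>T. w u v)"
      unfolding Y_def by (rule sum_split[OF finE1 finE2 disj f2_sub st_sub])
    show ?thesis unfolding tree_poly_def fpoly_def eq sum.union_disjoint[OF fX dj] sX sY ..
  qed
  have feq: "forests2 (V1 \<union> V2) (E1 \<union> E2) a b = {T. T \<subseteq> E1 \<union> E2 \<and> T \<inter> E1 \<in> forests2 V1 E1 a b \<and> T \<inter> E2 \<in> forests2 V2 E2 a b}"
  proof (rule set_eqI)
    fix T show "T \<in> forests2 (V1 \<union> V2) (E1 \<union> E2) a b \<longleftrightarrow> T \<in> {T. T \<subseteq> E1 \<union> E2 \<and> T \<inter> E1 \<in> forests2 V1 E1 a b \<and> T \<inter> E2 \<in> forests2 V2 E2 a b}"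
    proof (cases "T \<subseteq> E1 \<union> E2")
      case True thus ?thesis using forest_char[OF True] by simp
    next
      case False thus ?thesis using f2_sub[of "V1 \<union> V2" "E1 \<union> E2" a b] by auto
    qed
  qed
  show "fpoly (V1 \<union> V2) (E1 \<union> E2) a b w = fpoly V1 E1 a b w * fpoly V2 E2 a b w"
    unfolding fpoly_def feq by (rule sum_split[OF finE1 finE2 disj f2_sub f2_sub])
qed

end

context ser_setup begin

lemma ser_poly:
  "tree_poly (V1 \<union> V2) (E1 \<union> E2) w = tree_poly V1 E1 w * tree_poly V2 E2 w"
  "fpoly (V1 \<union> V2) (E1 \<union> E2) a b w = tree_poly V1 E1 w * fpoly V2 E2 m b w + fpoly V1 E1 a m w * tree_poly V2 E2 w"
proof -
  have teq: "spanning_trees (V1 \<union> V2) (E1 \<union> E2) = {T. T \<subseteq> E1 \<union> E2 \<and> T \<inter> E1 \<in> spanning_trees V1 E1 \<and> T \<inter> E2 \<in> spanning_trees V2 E2}"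
  proof (rule set_eqI)
    fix T show "T \<in> spanning_trees (V1 \<union> V2) (E1 \<union> E2) \<longleftrightarrow> T \<in> {T. T \<subseteq> E1 \<union> E2 \<and> T \<inter> E1 \<in> spanning_trees V1 E1 \<and> T \<inter> E2 \<in> spanning_trees V2 E2}"
    proof (cases "T \<subseteq> E1 \<union> E2")
      case True thus ?thesis using tree_char[OF True] by simp
    next
      case False thus ?thesis using st_sub[of "V1 \<union> V2" "E1 \<union> E2"] by auto
    qed
  qed
  show "tree_poly (V1 \<union> V2) (E1 \<union> E2) w = tree_poly V1 E1 w * tree_poly V2 E2 w"
    unfolding tree_poly_def teq by (rule sum_split[OF finE1 finE2 disj st_sub st_sub])
  define X where "X = {T. T \<subseteq> E1 \<union> E2 \<and> T \<inter> E1 \<in> spanning_trees V1 E1 \<and> T \<inter> E2 \<in> forests2 V2 E2 m b}"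
  define Y where "Y = {T. T \<subseteq> E1 \<union> E2 \<and> T \<inter> E1 \<in> forests2 V1 E1 a m \<and> T \<inter> E2 \<in> spanning_trees V2 E2}"
  have eq: "forests2 (V1 \<union> V2) (E1 \<union> E2) a b = X \<union> Y"
  proof (rule set_eqI)
    fix T show "T \<in> forests2 (V1 \<union> V2) (E1 \<union> E2) a b \<longleftrightarrow> T \<in> X \<union> Y"
    proof (cases "T \<subseteq> E1 \<union> E2")
      case True thus ?thesis using forest_char[OF True] unfolding X_def Y_def by simp
    next
      case False thus ?thesis using f2_sub[of "V1 \<union> V2" "E1 \<union> E2" a b] unfolding X_def Y_def by auto
    qed
  qed
  have dj: "X \<inter> Y = {}"
  proof -
    have nb: "T \<in> spanning_trees V1 E1 \<Longrightarrow> T \<in> forests2 V1 E1 a m \<Longrightarrow> False" for T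
    proof -
      assume h1: "T \<in> spanning_trees V1 E1" and h2: "T \<in> forests2 V1 E1 a m"
      have "card T = card V1 - 1" by (rule st_card[OF h1])
      moreover have "card T = card V1 - 2" by (rule f2_card[OF h2])
      ultimately show False using card1 by linarith
    qed
    show ?thesis
    proof (rule ccontr)
      assume "X \<inter> Y \<noteq> {}"
      then obtain T where "T \<in> X" "T \<in> Y" by blast
      hence "T \<inter> E1 \<in> spanning_trees V1 E1" "T \<inter> E1 \<in> forests2 V1 E1 a m" unfolding X_def Y_def by simp_all
      thus False using nb by blast
    qed
  qed
  have fE: "finite (E1 \<union> E2)" using finE1 finE2 by auto
  have "X \<subseteq> Pow (E1 \<union> E2)" "Y \<subseteq> Pow (E1 \<union> E2)" unfolding X_def Y_def by auto
  hence fX: "finite X" "finite Y" using fE by (meson finite_Pow_iff finite_subset)+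
  show "fpoly (V1 \<union> V2) (E1 \<union> E2) a b w = tree_poly V1 E1 w * fpoly V2 E2 m b w + fpoly V1 E1 a m w * tree_poly V2 E2 w"
  proof -
    have sX: "(\<Sum>T\<in>X. \<Prod>(u, v)\<in>T. w u v) = (\<Sum>T\<in>spanning_trees V1 E1. \<Prod>(u, v)\<in>T. w u v) * (\<Sum>T\<in>forests2 V2 E2 m b. \<Prod>(u, v)\<in>T. w u v)"
      unfolding X_def by (rule sum_split[OF finE1 finE2 disj st_sub f2_sub])
    have sY: "(\<Sum>T\<in>Y. \<Prod>(u, v)\<in>T. w u v) = (\<Sum>T\<in>forests2 V1 E1 a m. \<Prod>(u, v)\<in>T. w u v) * (\<Sum>T\<in>spanning_trees V2 E2. \<Prod>(u, v)\<in>T. w u v)"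
      unfolding Y_def by (rule sum_split[OF finE1 finE2 disj f2_sub st_sub])
    show ?thesis unfolding tree_poly_def fpoly_def eq sum.union_disjoint[OF fX dj] sX sY ..
  qed
qed

end

lemma edge_poly:
  assumes "a \<noteq> b"
  shows "tree_poly {a,b} {(a,b)} w = w a b" "fpoly {a,b} {(a,b)} a b w = 1"
  unfolding tree_poly_def fpoly_def edge_trees[OF assms] edge_forests[OF assms] by simp_all

lemma par_family:
  fixes V :: "'i \<Rightarrow> 'v set" and E :: "'i \<Rightarrow> ('v \<times> 'v) set"
  assumes fin: "finite I" and ab: "a \<noteq> b"
    and each: "\<And>i. i \<in> I \<Longrightarrow> finite (V i) \<and> E i \<subseteq> V i \<times> V i \<and> a \<in> V i \<and> b \<in> V i"
    and pw: "\<And>i j. i \<in> I \<Longrightarrow> j \<in> I \<Longrightarrow> i \<noteq> j \<Longrightarrow> V i \<inter> V j = {a,b} \<and> E i \<inter> E j = {}"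
  shows "tree_poly ({a,b} \<union> \<Union>(V ` I)) (\<Union>(E ` I)) w =
           (\<Sum>i\<in>I. tree_poly (V i) (E i) w * (\<Prod>j\<in>I - {i}. fpoly (V j) (E j) a b w)) \<and>
         fpoly ({a,b} \<union> \<Union>(V ` I)) (\<Union>(E ` I)) a b w = (\<Prod>i\<in>I. fpoly (V i) (E i) a b w)"
  using fin each pw
proof (induction I rule: finite_induct)
  case empty
  show ?case using ab unfolding tree_poly_def fpoly_def
    by (simp add: empty_trees[OF ab] empty_forests[OF ab])
next
  case (insert i I)
  have IH: "tree_poly ({a,b} \<union> \<Union>(V ` I)) (\<Union>(E ` I)) w =
           (\<Sum>i\<in>I. tree_poly (V i) (E i) w * (\<Prod>j\<in>I - {i}. fpoly (V j) (E j) a b w))"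
     "fpoly ({a,b} \<union> \<Union>(V ` I)) (\<Union>(E ` I)) a b w = (\<Prod>i\<in>I. fpoly (V i) (E i) a b w)"
  proof -
    have each_I: "\<And>j. j \<in> I \<Longrightarrow> finite (V j) \<and> E j \<subseteq> V j \<times> V j \<and> a \<in> V j \<and> b \<in> V j"
      using insert.prems(1) by blast
    have pw_I: "\<And>j l. j \<in> I \<Longrightarrow> l \<in> I \<Longrightarrow> j \<noteq> l \<Longrightarrow> V j \<inter> V l = {a,b} \<and> E j \<inter> E l = {}"
      using insert.prems(2) by blast
    from insert.IH[OF each_I pw_I] show "tree_poly ({a,b} \<union> \<Union>(V ` I)) (\<Union>(E ` I)) w =
           (\<Sum>i\<in>I. tree_poly (V i) (E i) w * (\<Prod>j\<in>I - {i}. fpoly (V j) (E j) a b w))"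
     "fpoly ({a,b} \<union> \<Union>(V ` I)) (\<Union>(E ` I)) a b w = (\<Prod>i\<in>I. fpoly (V i) (E i) a b w)" by blast+
  qed
  have ei: "finite (V i)" "E i \<subseteq> V i \<times> V i" "a \<in> V i" "b \<in> V i" using insert.prems(1) by auto
  interpret P: par_setup "V i" "{a,b} \<union> \<Union>(V ` I)" "E i" "\<Union>(E ` I)" a b
  proof
    show "finite (V i)" by fact
    show "finite ({a, b} \<union> \<Union> (V ` I))" using insert.hyps(1) insert.prems(1) by auto
    show "E i \<subseteq> V i \<times> V i" by fact
    show "\<Union> (E ` I) \<subseteq> ({a, b} \<union> \<Union> (V ` I)) \<times> ({a, b} \<union> \<Union> (V ` I))"
      using insert.prems(1) by blast
    show "V i \<inter> ({a, b} \<union> \<Union> (V ` I)) = {a, b}"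
      using insert.prems(2)[of i] insert.hyps(2) ei by auto
    show "a \<noteq> b" by fact
    show "E i \<inter> \<Union> (E ` I) = {}"
      using insert.prems(2)[of i] insert.hyps(2) by auto
  qed
  have Veq: "{a,b} \<union> \<Union>(V ` insert i I) = V i \<union> ({a,b} \<union> \<Union>(V ` I))" using ei by auto
  have Eeq: "\<Union>(E ` insert i I) = E i \<union> \<Union>(E ` I)" by auto
  have r1: "(\<Prod>j\<in>insert i I - {i}. fpoly (V j) (E j) a b w) = (\<Prod>j\<in>I. fpoly (V j) (E j) a b w)"
    using insert.hyps(2) by simp
  have r2: "(\<Prod>j\<in>insert i I - {k}. fpoly (V j) (E j) a b w) = fpoly (V i) (E i) a b w * (\<Prod>j\<in>I - {k}. fpoly (V j) (E j) a b w)" if "k \<in> I" for k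
  proof -
    have "insert i I - {k} = insert i (I - {k})" using that insert.hyps(2) by auto
    thus ?thesis using insert.hyps by simp
  qed
  define tp where "tp = (\<lambda>j. tree_poly (V j) (E j) w)"
  define fp where "fp = (\<lambda>j. fpoly (V j) (E j) a b w)"
  have s1: "(\<Sum>j\<in>insert i I. tp j * (\<Prod>l\<in>insert i I - {j}. fp l)) =
        tp i * (\<Prod>l\<in>I. fp l) + (\<Sum>j\<in>I. tp j * (\<Prod>l\<in>insert i I - {j}. fp l))"
    using insert.hyps r1 unfolding fp_def by simp
  also have "(\<Sum>j\<in>I. tp j * (\<Prod>l\<in>insert i I - {j}. fp l)) = (\<Sum>j\<in>I. fp i * (tp j * (\<Prod>l\<in>I - {j}. fp l)))"
    by (rule sum.cong[OF refl]) (simp add: r2 fp_def)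
  also have "\<dots> = fp i * (\<Sum>j\<in>I. tp j * (\<Prod>l\<in>I - {j}. fp l))" by (simp add: sum_distrib_left)
  finally have s2: "(\<Sum>j\<in>insert i I. tp j * (\<Prod>l\<in>insert i I - {j}. fp l)) =
     tp i * (\<Prod>l\<in>I. fp l) + fp i * (\<Sum>j\<in>I. tp j * (\<Prod>l\<in>I - {j}. fp l))" .
  have s3: "(\<Prod>l\<in>insert i I. fp l) = fp i * (\<Prod>l\<in>I. fp l)" using insert.hyps by simp
  show ?case
    unfolding Veq Eeq P.par_poly IH
    using s2 s3 unfolding tp_def fp_def by simp
qed



lemma esym_0: "finite A \<Longrightarrow> esym x 0 A = 1"
proof -
  assume "finite A"
  hence "{T. T \<subseteq> A \<and> card T = 0} = {{}}" using finite_subset by (fastforce simp: card_eq_0_iff)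
  thus ?thesis unfolding esym_def by simp
qed

lemma esym_indep: "j \<notin> A \<Longrightarrow> esym (x(j:=t)) m A = esym x m A"
  unfolding esym_def by (intro sum.cong refl prod.cong) auto

lemma esym_rec:
  assumes "finite A" "j \<in> A"
  shows "esym x (Suc m) A = x j * esym x m (A - {j}) + esym x (Suc m) (A - {j})"
proof -
  define F0 where "F0 = {T. T \<subseteq> A - {j} \<and> card T = Suc m}"
  define F1 where "F1 = {T. T \<subseteq> A - {j} \<and> card T = m}"
  have eq: "{T. T \<subseteq> A \<and> card T = Suc m} = F0 \<union> insert j ` F1"
  proof (rule set_eqI, rule iffI)
    fix T assume "T \<in> {T. T \<subseteq> A \<and> card T = Suc m}"
    hence T: "T \<subseteq> A" "card T = Suc m" by auto
    have fT: "finite T" using T assms finite_subset by blast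
    show "T \<in> F0 \<union> insert j ` F1"
    proof (cases "j \<in> T")
      case True
      hence "T = insert j (T - {j})" "T - {j} \<in> F1" using T fT unfolding F1_def by auto
      thus ?thesis by blast
    next
      case False thus ?thesis using T unfolding F0_def by auto
    qed
  next
    fix T assume "T \<in> F0 \<union> insert j ` F1"
    thus "T \<in> {T. T \<subseteq> A \<and> card T = Suc m}"
    proof
      assume "T \<in> F0" thus ?thesis unfolding F0_def by auto
    next
      assume "T \<in> insert j ` F1"
      then obtain S where S: "S \<subseteq> A - {j}" "card S = m" "T = insert j S" unfolding F1_def by auto
      have "finite S" using S assms finite_subset by blast
      moreover have "j \<notin> S" using S by auto
      ultimately show ?thesis using S assms by auto
    qed
  qed
  have fin: "finite F0" "finite (insert j ` F1)" unfolding F0_def F1_def using assms by auto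
  have dj: "F0 \<inter> insert j ` F1 = {}" unfolding F0_def by auto
  have inj: "inj_on (insert j) F1"
  proof (rule inj_onI)
    fix S S' assume h: "S \<in> F1" "S' \<in> F1" "insert j S = insert j S'"
    hence "j \<notin> S" "j \<notin> S'" unfolding F1_def by auto
    thus "S = S'" using h(3) by (metis Diff_insert_absorb)
  qed
  have "(\<Sum>T\<in>insert j ` F1. \<Prod>i\<in>T. x i) = (\<Sum>S\<in>F1. \<Prod>i\<in>insert j S. x i)"
    using sum.reindex[OF inj] by (simp add: comp_def)
  also have "\<dots> = (\<Sum>S\<in>F1. x j * (\<Prod>i\<in>S. x i))"
  proof (rule sum.cong[OF refl])
    fix S assume "S \<in> F1"
    hence "finite S" "j \<notin> S" unfolding F1_def using assms finite_subset by auto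
    thus "(\<Prod>i\<in>insert j S. x i) = x j * (\<Prod>i\<in>S. x i)" by simp
  qed
  finally have "(\<Sum>T\<in>insert j ` F1. \<Prod>i\<in>T. x i) = x j * esym x m (A - {j})"
    unfolding esym_def F1_def by (simp add: sum_distrib_left)
  thus ?thesis unfolding esym_def[of x "Suc m" A] eq sum.union_disjoint[OF fin dj]
    unfolding F0_def esym_def by simp
qed

lemma swap_sum:
  fixes g :: "nat set \<Rightarrow> real"
  assumes "finite C"
  shows "(\<Sum>a\<in>C. \<Sum>S\<in>{S. S \<subseteq> C - {a} \<and> P (card S)}. g (insert a S)) =
         (\<Sum>S\<in>{S. S \<subseteq> C \<and> S \<noteq> {} \<and> P (card S - 1)}. of_nat (card S) * g S)"
proof -
  have fin2: "\<forall>a\<in>C. finite {S. S \<subseteq> C - {a} \<and> P (card S)}" using assms by auto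
  have "(\<Sum>a\<in>C. \<Sum>S\<in>{S. S \<subseteq> C - {a} \<and> P (card S)}. g (insert a S)) =
        (\<Sum>p\<in>Sigma C (\<lambda>a. {S. S \<subseteq> C - {a} \<and> P (card S)}). g (insert (fst p) (snd p)))"
    by (subst sum.Sigma[OF assms fin2]) (simp add: case_prod_beta)
  also have "\<dots> = (\<Sum>q\<in>Sigma {S. S \<subseteq> C \<and> S \<noteq> {} \<and> P (card S - 1)} (\<lambda>S. S). g (fst q))"
  proof (rule sum.reindex_bij_witness[where i="\<lambda>q. (snd q, fst q - {snd q})" and j="\<lambda>p. (insert (fst p) (snd p), fst p)"])
    fix p assume p: "p \<in> Sigma C (\<lambda>a. {S. S \<subseteq> C - {a} \<and> P (card S)})"
    obtain a S where pa: "p = (a,S)" by (cases p)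
    have fS: "finite S" using p pa assms finite_subset by auto
    have aS: "a \<notin> S" using p pa by auto
    show "(snd (insert (fst p) (snd p), fst p), fst (insert (fst p) (snd p), fst p) - {snd (insert (fst p) (snd p), fst p)}) = p"
      using p pa by auto
    show "(insert (fst p) (snd p), fst p) \<in> Sigma {S. S \<subseteq> C \<and> S \<noteq> {} \<and> P (card S - 1)} (\<lambda>S. S)"
      using p pa fS aS by auto
    show "g (fst (insert (fst p) (snd p), fst p)) = g (insert (fst p) (snd p))" by simp
  next
    fix q assume q: "q \<in> Sigma {S. S \<subseteq> C \<and> S \<noteq> {} \<and> P (card S - 1)} (\<lambda>S. S)"
    obtain S a where qa: "q = (S,a)" by (cases q)
    have fS: "finite S" using q qa assms finite_subset by auto
    show "(insert (fst (snd q, fst q - {snd q})) (snd (snd q, fst q - {snd q})), fst (snd q, fst q - {snd q})) = q"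
      using q qa by auto
    show "(snd q, fst q - {snd q}) \<in> Sigma C (\<lambda>a. {S. S \<subseteq> C - {a} \<and> P (card S)})"
      using q qa fS by auto
  qed
  also have "\<dots> = (\<Sum>S\<in>{S. S \<subseteq> C \<and> S \<noteq> {} \<and> P (card S - 1)}. \<Sum>a\<in>S. g S)"
    using assms by (subst sum.Sigma) (auto intro: finite_subset simp: case_prod_beta)
  also have "\<dots> = (\<Sum>S\<in>{S. S \<subseteq> C \<and> S \<noteq> {} \<and> P (card S - 1)}. of_nat (card S) * g S)"
    by simp
  finally show ?thesis .
qed

lemma swap_prod:
  fixes g :: "nat set \<Rightarrow> real"
  assumes "finite C"
  shows "(\<Prod>a\<in>C. \<Prod>S\<in>{S. S \<subseteq> C - {a} \<and> P (card S)}. g (insert a S)) =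
         (\<Prod>S\<in>{S. S \<subseteq> C \<and> S \<noteq> {} \<and> P (card S - 1)}. g S ^ card S)"
proof -
  have fin2: "\<forall>a\<in>C. finite {S. S \<subseteq> C - {a} \<and> P (card S)}" using assms by auto
  have "(\<Prod>a\<in>C. \<Prod>S\<in>{S. S \<subseteq> C - {a} \<and> P (card S)}. g (insert a S)) =
        (\<Prod>p\<in>Sigma C (\<lambda>a. {S. S \<subseteq> C - {a} \<and> P (card S)}). g (insert (fst p) (snd p)))"
    by (subst prod.Sigma[OF assms fin2]) (simp add: case_prod_beta)
  also have "\<dots> = (\<Prod>q\<in>Sigma {S. S \<subseteq> C \<and> S \<noteq> {} \<and> P (card S - 1)} (\<lambda>S. S). g (fst q))"
  proof (rule prod.reindex_bij_witness[where i="\<lambda>q. (snd q, fst q - {snd q})" and j="\<lambda>p. (insert (fst p) (snd p), fst p)"])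
    fix p assume p: "p \<in> Sigma C (\<lambda>a. {S. S \<subseteq> C - {a} \<and> P (card S)})"
    obtain a S where pa: "p = (a,S)" by (cases p)
    have fS: "finite S" using p pa assms finite_subset by auto
    have aS: "a \<notin> S" using p pa by auto
    show "(snd (insert (fst p) (snd p), fst p), fst (insert (fst p) (snd p), fst p) - {snd (insert (fst p) (snd p), fst p)}) = p"
      using p pa by auto
    show "(insert (fst p) (snd p), fst p) \<in> Sigma {S. S \<subseteq> C \<and> S \<noteq> {} \<and> P (card S - 1)} (\<lambda>S. S)"
      using p pa fS aS by auto
    show "g (fst (insert (fst p) (snd p), fst p)) = g (insert (fst p) (snd p))" by simp
  next
    fix q assume q: "q \<in> Sigma {S. S \<subseteq> C \<and> S \<noteq> {} \<and> P (card S - 1)} (\<lambda>S. S)"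
    obtain S a where qa: "q = (S,a)" by (cases q)
    have fS: "finite S" using q qa assms finite_subset by auto
    show "(insert (fst (snd q, fst q - {snd q})) (snd (snd q, fst q - {snd q})), fst (snd q, fst q - {snd q})) = q"
      using q qa by auto
    show "(snd q, fst q - {snd q}) \<in> Sigma C (\<lambda>a. {S. S \<subseteq> C - {a} \<and> P (card S)})"
      using q qa fS by auto
  qed
  also have "\<dots> = (\<Prod>S\<in>{S. S \<subseteq> C \<and> S \<noteq> {} \<and> P (card S - 1)}. \<Prod>a\<in>S. g S)"
    using assms by (subst prod.Sigma) (auto intro: finite_subset simp: case_prod_beta)
  also have "\<dots> = (\<Prod>S\<in>{S. S \<subseteq> C \<and> S \<noteq> {} \<and> P (card S - 1)}. g S ^ card S)"
    by simp
  finally show ?thesis .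
qed

lemma esym_sum:
  assumes "finite C"
  shows "(\<Sum>a\<in>C. x a * esym x m (C - {a})) = of_nat (Suc m) * esym x (Suc m) C"
proof -
  have "(\<Sum>a\<in>C. x a * esym x m (C - {a})) = (\<Sum>a\<in>C. \<Sum>S\<in>{S. S \<subseteq> C - {a} \<and> card S = m}. \<Prod>i\<in>insert a S. x i)"
  proof (rule sum.cong[OF refl])
    fix a assume "a \<in> C"
    have "(\<Sum>S\<in>{S. S \<subseteq> C - {a} \<and> card S = m}. \<Prod>i\<in>insert a S. x i) =
          (\<Sum>S\<in>{S. S \<subseteq> C - {a} \<and> card S = m}. x a * (\<Prod>i\<in>S. x i))"
    proof (rule sum.cong[OF refl])
      fix S assume "S \<in> {S. S \<subseteq> C - {a} \<and> card S = m}"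
      hence "finite S" "a \<notin> S" using assms finite_subset by auto
      thus "(\<Prod>i\<in>insert a S. x i) = x a * (\<Prod>i\<in>S. x i)" by simp
    qed
    thus "x a * esym x m (C - {a}) = (\<Sum>S\<in>{S. S \<subseteq> C - {a} \<and> card S = m}. \<Prod>i\<in>insert a S. x i)"
      unfolding esym_def by (simp add: sum_distrib_left)
  qed
  also have "\<dots> = (\<Sum>S\<in>{S. S \<subseteq> C \<and> S \<noteq> {} \<and> card S - 1 = m}. of_nat (card S) * (\<Prod>i\<in>S. x i))"
    using swap_sum[OF assms, where P="\<lambda>c. c = m" and g="\<lambda>S. \<Prod>i\<in>S. x i"] by simp
  also have "\<dots> = (\<Sum>S\<in>{S. S \<subseteq> C \<and> card S = Suc m}. of_nat (Suc m) * (\<Prod>i\<in>S. x i))"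
  proof -
    have "S \<in> {S. S \<subseteq> C \<and> S \<noteq> {} \<and> card S - 1 = m} \<longleftrightarrow> S \<in> {S. S \<subseteq> C \<and> card S = Suc m}" for S
    proof (cases "S \<subseteq> C")
      case True hence "finite S" using assms finite_subset by blast
      hence "S \<noteq> {} \<longleftrightarrow> card S \<noteq> 0" by simp
      moreover have "(card S \<noteq> 0 \<and> card S - 1 = m) \<longleftrightarrow> card S = Suc m" by arith
      ultimately show ?thesis using True by auto
    next
      case False thus ?thesis by auto
    qed
    hence "{S. S \<subseteq> C \<and> S \<noteq> {} \<and> card S - 1 = m} = {S. S \<subseteq> C \<and> card S = Suc m}" by blast
    thus ?thesis by (intro sum.cong) auto
  qed
  also have "\<dots> = of_nat (Suc m) * esym x (Suc m) C" unfolding esym_def by (simp add: sum_distrib_left)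
  finally show ?thesis .
qed

lemma partial_esym:
  assumes "finite A" "j \<in> A"
  shows "partial j (\<lambda>y. esym y (Suc m) A) = (\<lambda>y. esym y m (A - {j}))"
proof
  fix y
  have eq: "(\<lambda>t. esym (y(j:=t)) (Suc m) A) = (\<lambda>t. t * esym y m (A - {j}) + esym y (Suc m) (A - {j}))"
  proof
    fix t
    show "esym (y(j:=t)) (Suc m) A = t * esym y m (A - {j}) + esym y (Suc m) (A - {j})"
      using esym_rec[OF assms, of "y(j:=t)" m] esym_indep[of j "A - {j}" y t] by simp
  qed
  have "((\<lambda>t. t * esym y m (A - {j}) + esym y (Suc m) (A - {j})) has_real_derivative esym y m (A - {j})) (at (y j))"
    by (auto intro!: derivative_eq_intros)
  hence "deriv (\<lambda>t. t * esym y m (A - {j}) + esym y (Suc m) (A - {j})) (y j) = esym y m (A - {j})"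
    by (rule DERIV_imp_deriv)
  thus "partial j (\<lambda>y. esym y (Suc m) A) y = esym y m (A - {j})"
    unfolding partial_def eq by simp
qed

lemma foldr_partial_esym:
  assumes "finite A" "distinct L" "set L \<subseteq> A" "length L \<le> m"
  shows "foldr partial L (\<lambda>y. esym y m A) = (\<lambda>y. esym y (m - length L) (A - set L))"
  using assms(2-4)
proof (induction L)
  case Nil then show ?case by simp
next
  case (Cons j L)
  have IH: "foldr partial L (\<lambda>y. esym y m A) = (\<lambda>y. esym y (m - length L) (A - set L))"
    using Cons by auto
  have "m - length L = Suc (m - length (j # L))" using Cons.prems by auto
  moreover have "j \<in> A - set L" using Cons.prems by auto
  moreover have "finite (A - set L)" using assms(1) by auto
  ultimately have "partial j (\<lambda>y. esym y (m - length L) (A - set L)) = (\<lambda>y. esym y (m - length (j#L)) (A - set L - {j}))"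
    using partial_esym[of "A - set L" j] by simp
  moreover have "A - set L - {j} = A - set (j # L)" by auto
  ultimately show ?case using IH by simp
qed

lemma partials_esym:
  assumes "finite A" "S \<subseteq> A" "card S \<le> m"
  shows "partials S (\<lambda>y. esym y m A) x = esym x (m - card S) (A - S)"
proof -
  have fS: "finite S" using assms finite_subset by blast
  show ?thesis unfolding partials_def
    using foldr_partial_esym[OF assms(1), of "sorted_list_of_set S" m] fS assms by simp
qed



fun Psi :: "(nat \<Rightarrow> real) \<Rightarrow> nat \<Rightarrow> nat set \<Rightarrow> real" where
  "Psi x 0 C = 1"
| "Psi x (Suc d) C = fact (Suc d) ^ card C * esym x (Suc d) C ^ (card C - 1) * (\<Prod>a\<in>C. Psi x d (C - {a}))"

fun cst :: "nat \<Rightarrow> nat \<Rightarrow> real" where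
  "cst 0 N = 1"
| "cst (Suc d) N = fact (Suc d) ^ N * cst d (N - 1) ^ N"

definition Qf :: "(nat \<Rightarrow> real) \<Rightarrow> nat \<Rightarrow> nat set \<Rightarrow> real" where
  "Qf x d C = (\<Prod>S\<in>{S. S \<subseteq> C \<and> card S < d}. esym x (d - card S) (C - S) ^ (fact (card S) * (card C - card S - 1)))"

lemma cst_pos: "cst d N > 0"
  by (induction d arbitrary: N) auto

lemma Qf_Suc:
  assumes fC: "finite C"
  shows "Qf x (Suc d) C = esym x (Suc d) C ^ (card C - 1) * (\<Prod>a\<in>C. Qf x d (C - {a}))"
proof -
  define N where "N = card C"
  define g where "g = (\<lambda>S'. esym x (Suc d - card S') (C - S') ^ (fact (card S' - 1) * (N - card S' - 1)))"
  have inner: "Qf x d (C - {a}) = (\<Prod>S\<in>{S. S \<subseteq> C - {a} \<and> card S < d}. g (insert a S))" if a: "a \<in> C" for a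
    unfolding Qf_def
  proof (rule prod.cong[OF refl])
    fix S assume S: "S \<in> {S. S \<subseteq> C - {a} \<and> card S < d}"
    have fS: "finite S" using S fC finite_subset by auto
    have aS: "a \<notin> S" using S by auto
    have c: "card (insert a S) = Suc (card S)" using fS aS by simp
    have cC: "card (C - {a}) = N - 1" using a fC N_def by simp
    have "C - {a} - S = C - insert a S" by auto
    moreover have "N - 1 - card S - 1 = N - Suc (card S) - 1" by simp
    ultimately show "esym x (d - card S) (C - {a} - S) ^ (fact (card S) * (card (C - {a}) - card S - 1)) = g (insert a S)"
      unfolding g_def c cC by simp
  qed
  have "(\<Prod>a\<in>C. Qf x d (C - {a})) = (\<Prod>a\<in>C. \<Prod>S\<in>{S. S \<subseteq> C - {a} \<and> card S < d}. g (insert a S))"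
    using inner by (rule prod.cong[OF refl])
  also have "\<dots> = (\<Prod>S\<in>{S. S \<subseteq> C \<and> S \<noteq> {} \<and> card S - 1 < d}. g S ^ card S)"
    by (rule swap_prod[OF fC, where P="\<lambda>c. c < d"])
  also have "\<dots> = (\<Prod>S\<in>{S. S \<subseteq> C \<and> S \<noteq> {} \<and> card S < Suc d}. esym x (Suc d - card S) (C - S) ^ (fact (card S) * (N - card S - 1)))"
  proof (rule prod.cong)
    show "{S. S \<subseteq> C \<and> S \<noteq> {} \<and> card S - 1 < d} = {S. S \<subseteq> C \<and> S \<noteq> {} \<and> card S < Suc d}"
    proof (rule Collect_cong)
      fix S show "(S \<subseteq> C \<and> S \<noteq> {} \<and> card S - 1 < d) = (S \<subseteq> C \<and> S \<noteq> {} \<and> card S < Suc d)"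
      proof (cases "S \<subseteq> C")
        case True hence "finite S" using fC finite_subset by blast
        thus ?thesis using True by (cases "card S") auto
      qed auto
    qed
  next
    fix S assume S: "S \<in> {S. S \<subseteq> C \<and> S \<noteq> {} \<and> card S < Suc d}"
    hence "finite S" "S \<noteq> {}" using fC finite_subset by auto
    hence "card S \<ge> 1" by (simp add: Suc_leI card_gt_0_iff)
    then obtain c where c: "card S = Suc c" by (cases "card S") auto
    show "g S ^ card S = esym x (Suc d - card S) (C - S) ^ (fact (card S) * (N - card S - 1))"
    proof -
      have ex0: "fact (Suc c) * K = fact c * K * Suc c" for K :: nat
        by (simp add: algebra_simps)
      note ex = ex0[of "N - Suc c - 1"]
      have "g S ^ card S = (esym x (Suc d - Suc c) (C - S) ^ (fact c * (N - Suc c - 1))) ^ Suc c"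
        unfolding g_def c by simp
      also have "\<dots> = esym x (Suc d - Suc c) (C - S) ^ (fact (Suc c) * (N - Suc c - 1))"
        unfolding ex power_mult by simp
      finally show ?thesis unfolding c .
    qed
  qed
  finally have P: "(\<Prod>a\<in>C. Qf x d (C - {a})) = (\<Prod>S\<in>{S. S \<subseteq> C \<and> S \<noteq> {} \<and> card S < Suc d}. esym x (Suc d - card S) (C - S) ^ (fact (card S) * (N - card S - 1)))" .
  have split: "{S. S \<subseteq> C \<and> card S < Suc d} = insert {} {S. S \<subseteq> C \<and> S \<noteq> {} \<and> card S < Suc d}" by auto
  have fin: "finite {S. S \<subseteq> C \<and> S \<noteq> {} \<and> card S < Suc d}" using fC by auto
  show ?thesis unfolding Qf_def[of x "Suc d" C] split prod.insert[OF fin, of "{}", simplified]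
    using P N_def by simp
qed

lemma Psi_formula:
  assumes "finite C"
  shows "Psi x d C = cst d (card C) * Qf x d C"
  using assms
proof (induction d arbitrary: C)
  case 0
  then show ?case unfolding Qf_def by simp
next
  case (Suc d)
  have "(\<Prod>a\<in>C. Psi x d (C - {a})) = (\<Prod>a\<in>C. cst d (card C - 1) * Qf x d (C - {a}))"
  proof (rule prod.cong[OF refl])
    fix a assume "a \<in> C"
    thus "Psi x d (C - {a}) = cst d (card C - 1) * Qf x d (C - {a})" using Suc by simp
  qed
  also have "\<dots> = cst d (card C - 1) ^ card C * (\<Prod>a\<in>C. Qf x d (C - {a}))"
    by (simp add: prod.distrib)
  finally show ?case using Qf_Suc[OF Suc.prems, of x d] by (simp add: algebra_simps)
qed



definition node :: "nat list \<Rightarrow> vtx" where "node u = (if u = [] then Sv else W u)"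
definition ext :: "nat \<Rightarrow> nat \<Rightarrow> nat list \<Rightarrow> nat list set" where
  "ext n k u = {v \<in> words n k. \<exists>a t. v = u @ a # t}"
definition Vg :: "nat \<Rightarrow> nat \<Rightarrow> nat list \<Rightarrow> vtx set" where
  "Vg n k u = {node u, Zv} \<union> W ` ext n k u"
definition Eg :: "nat \<Rightarrow> nat \<Rightarrow> nat list \<Rightarrow> (vtx \<times> vtx) set" where
  "Eg n k u = Gedges n k \<inter> (Vg n k u \<times> Vg n k u)"
definition valid :: "nat \<Rightarrow> nat \<Rightarrow> nat list \<Rightarrow> bool" where
  "valid n k u = (distinct u \<and> set u \<subseteq> {1..n} \<and> length u \<le> k)"

lemma finite_words: "finite (words n k)"
proof -
  have "words n k \<subseteq> {w. set w \<subseteq> {1..n} \<and> length w \<le> k}" unfolding words_def by auto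
  thus ?thesis using finite_lists_length_le[of "{1..n}" k] finite_subset by blast
qed

lemma finite_Vg: "finite (Vg n k u)"
proof -
  have "ext n k u \<subseteq> words n k" unfolding ext_def by auto
  hence "finite (ext n k u)" using finite_words finite_subset by blast
  thus ?thesis unfolding Vg_def by auto
qed

lemma Eg_sub: "Eg n k u \<subseteq> Vg n k u \<times> Vg n k u" unfolding Eg_def by auto

lemma Zv_Vg: "Zv \<in> Vg n k u" unfolding Vg_def by auto
lemma node_Vg: "node u \<in> Vg n k u" unfolding Vg_def by auto
lemma node_Zv: "node u \<noteq> Zv" unfolding node_def by auto
lemma Sv_Vg: "Sv \<in> Vg n k u \<longleftrightarrow> u = []" unfolding Vg_def node_def by auto
lemma W_Vg: "W v \<in> Vg n k u \<longleftrightarrow> (u \<noteq> [] \<and> v = u) \<or> v \<in> ext n k u"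
  unfolding Vg_def node_def by auto

locale gsetup =
  fixes n k :: nat
  assumes k1: "1 \<le> k" and kn: "k < n"
begin

abbreviation "C u \<equiv> {1..n} - set u"

lemma snoc_words:
  assumes "valid n k u" "length u < k" "a \<in> C u"
  shows "u @ [a] \<in> words n k" "valid n k (u @ [a])"
  using assms unfolding valid_def words_def by auto

lemma W_Vg_snoc:
  assumes "valid n k u" "length u < k" "a \<in> C u"
  shows "W v \<in> Vg n k (u @ [a]) \<longleftrightarrow> v \<in> words n k \<and> (\<exists>t. v = u @ a # t)"
proof
  assume "W v \<in> Vg n k (u @ [a])"
  hence "v = u @ [a] \<or> v \<in> ext n k (u @ [a])" using W_Vg by auto
  thus "v \<in> words n k \<and> (\<exists>t. v = u @ a # t)"
    using snoc_words[OF assms] unfolding ext_def by auto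
next
  assume h: "v \<in> words n k \<and> (\<exists>t. v = u @ a # t)"
  then obtain t where t: "v = u @ a # t" by auto
  show "W v \<in> Vg n k (u @ [a])"
  proof (cases t)
    case Nil thus ?thesis using t W_Vg by auto
  next
    case (Cons b t')
    hence "v \<in> ext n k (u @ [a])" using h t unfolding ext_def by auto
    thus ?thesis using W_Vg by auto
  qed
qed

lemma ext_char:
  assumes "valid n k u"
  shows "v \<in> ext n k u \<longleftrightarrow> (\<exists>a\<in>C u. v \<in> words n k \<and> (\<exists>t. v = u @ a # t))"
proof
  assume "v \<in> ext n k u"
  then obtain a t where h: "v \<in> words n k" "v = u @ a # t" unfolding ext_def by auto
  hence "a \<in> C u" unfolding words_def by auto
  thus "\<exists>a\<in>C u. v \<in> words n k \<and> (\<exists>t. v = u @ a # t)" using h by blast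
next
  assume "\<exists>a\<in>C u. v \<in> words n k \<and> (\<exists>t. v = u @ a # t)"
  thus "v \<in> ext n k u" unfolding ext_def by auto
qed

lemma Sv_notin_snoc: "Sv \<notin> Vg n k (u @ [a])" using Sv_Vg by auto

definition Vs where "Vs u a = insert (node u) (Vg n k (u @ [a]))"
definition Es where "Es u a = insert (node u, W (u @ [a])) (Eg n k (u @ [a]))"

lemma node_notin:
  assumes "valid n k u" "length u < k" "a \<in> C u"
  shows "node u \<notin> Vg n k (u @ [a])"
proof (cases "u = []")
  case True thus ?thesis using Sv_Vg unfolding node_def by auto
next
  case False
  hence "node u = W u" unfolding node_def by auto
  moreover have "W u \<notin> Vg n k (u @ [a])" using W_Vg_snoc[OF assms, of u] by auto
  ultimately show ?thesis by auto
qed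

lemma Vg_decomp:
  assumes "valid n k u" "length u < k"
  shows "Vg n k u = {node u, Zv} \<union> \<Union>(Vs u ` C u)"
proof (rule set_eqI)
  fix x
  show "x \<in> Vg n k u \<longleftrightarrow> x \<in> {node u, Zv} \<union> \<Union>(Vs u ` C u)"
  proof (cases x)
    case Sv
    thus ?thesis using Sv_Vg[of n k u] Sv_notin_snoc unfolding Vs_def node_def by auto
  next
    case Zv
    thus ?thesis using Zv_Vg by auto
  next
    case (W v)
    have "W v \<in> Vg n k u \<longleftrightarrow> W v = node u \<or> (\<exists>a\<in>C u. W v \<in> Vg n k (u @ [a]))"
      using W_Vg[of v n k u] ext_char[OF assms(1), of v] W_Vg_snoc[OF assms] unfolding node_def by auto
    thus ?thesis using W unfolding Vs_def by auto
  qed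
qed

lemma Vs_int:
  assumes "valid n k u" "length u < k" "a \<in> C u" "b \<in> C u" "a \<noteq> b"
  shows "Vs u a \<inter> Vs u b = {node u, Zv}"
proof (rule set_eqI)
  fix x
  show "x \<in> Vs u a \<inter> Vs u b \<longleftrightarrow> x \<in> {node u, Zv}"
  proof (cases x)
    case Sv thus ?thesis using Sv_notin_snoc unfolding Vs_def by auto
  next
    case Zv thus ?thesis using Zv_Vg unfolding Vs_def by auto
  next
    case (W v)
    have "\<not> (W v \<in> Vg n k (u @ [a]) \<and> W v \<in> Vg n k (u @ [b]))"
      using W_Vg_snoc[OF assms(1,2,3), of v] W_Vg_snoc[OF assms(1,2,4), of v] assms(5) by auto
    thus ?thesis using W unfolding Vs_def by auto
  qed
qed

lemma edge_node:
  assumes "valid n k u" "length u < k" "a \<in> C u"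
  shows "(node u, W (u @ [a])) \<in> Gedges n k"
proof (cases "u = []")
  case True thus ?thesis using assms unfolding Gedges_def node_def by auto
next
  case False thus ?thesis using snoc_words[OF assms] unfolding Gedges_def node_def by auto
qed

lemma Es_sub_G: assumes "valid n k u" "length u < k" "a \<in> C u" shows "Es u a \<subseteq> Gedges n k"
  using edge_node[OF assms] unfolding Es_def Eg_def by auto

lemma Es_sub_V: assumes "valid n k u" "length u < k" "a \<in> C u" shows "Es u a \<subseteq> Vs u a \<times> Vs u a"
  using W_Vg_snoc[OF assms, of "u @ [a]"] snoc_words[OF assms] Eg_sub[of n k "u @ [a]"] unfolding Es_def Vs_def by auto

lemma no_edge:
  assumes "valid n k u" "length u < k" "(x,y) \<in> Gedges n k" "x \<in> {node u, Zv}" "y \<in> {node u, Zv}"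
  shows False
  using assms unfolding Gedges_def node_def by (auto split: if_splits)

lemma Es_disj:
  assumes "valid n k u" "length u < k" "a \<in> C u" "b \<in> C u" "a \<noteq> b"
  shows "Es u a \<inter> Es u b = {}"
proof (rule ccontr)
  assume "Es u a \<inter> Es u b \<noteq> {}"
  then obtain x y where e: "(x,y) \<in> Es u a" "(x,y) \<in> Es u b" by auto
  hence "x \<in> Vs u a \<inter> Vs u b" "y \<in> Vs u a \<inter> Vs u b"
    using Es_sub_V[OF assms(1,2,3)] Es_sub_V[OF assms(1,2,4)] by auto
  hence "x \<in> {node u, Zv}" "y \<in> {node u, Zv}" using Vs_int[OF assms] by auto
  moreover have "(x,y) \<in> Gedges n k" using e Es_sub_G[OF assms(1,2,3)] by auto
  ultimately show False using no_edge[OF assms(1,2)] by blast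
qed

lemma Eg_decomp:
  assumes "valid n k u" "length u < k"
  shows "Eg n k u = \<Union>(Es u ` C u)"
proof
  show "\<Union>(Es u ` C u) \<subseteq> Eg n k u"
  proof
    fix e assume "e \<in> \<Union>(Es u ` C u)"
    then obtain a where a: "a \<in> C u" "e \<in> Es u a" by auto
    have "e \<in> Gedges n k" using a Es_sub_G[OF assms a(1)] by auto
    moreover have "e \<in> Vs u a \<times> Vs u a" using a Es_sub_V[OF assms a(1)] by auto
    moreover have "Vs u a \<subseteq> Vg n k u" using Vg_decomp[OF assms] a(1) by auto
    ultimately show "e \<in> Eg n k u" unfolding Eg_def by auto
  qed
next
  show "Eg n k u \<subseteq> \<Union>(Es u ` C u)"
  proof
    fix e assume e: "e \<in> Eg n k u"
    obtain x y where xy: "e = (x,y)" by (cases e)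
    have G: "(x,y) \<in> Gedges n k" and xV: "x \<in> Vg n k u" and yV: "y \<in> Vg n k u"
      using e xy unfolding Eg_def by auto
    have inEg: "(x,y) \<in> Eg n k (u @ [a])" if "x \<in> Vg n k (u @ [a])" "y \<in> Vg n k (u @ [a])" for a
      using that G unfolding Eg_def by auto
    from G have "(x = Sv \<and> (\<exists>i\<in>{1..n}. y = W [i])) \<or>
        (\<exists>w a. w \<noteq> [] \<and> w @ [a] \<in> words n k \<and> x = W w \<and> y = W (w @ [a])) \<or>
        (\<exists>w. w \<in> words n k \<and> length w = k \<and> x = W w \<and> y = Zv)"
      unfolding Gedges_def by auto
    thus "e \<in> \<Union>(Es u ` C u)"
    proof (elim disjE exE conjE bexE)
      fix i assume h: "x = Sv" "i \<in> {1..n}" "y = W [i]"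
      hence "u = []" using xV Sv_Vg by auto
      thus ?thesis using h xy unfolding Es_def node_def by auto
    next
      fix w a assume h: "w \<noteq> []" "w @ [a] \<in> words n k" "x = W w" "y = W (w @ [a])"
      have "(u \<noteq> [] \<and> w = u) \<or> w \<in> ext n k u" using xV h(3) W_Vg by auto
      thus ?thesis
      proof
        assume "u \<noteq> [] \<and> w = u"
        hence "a \<in> C u" "x = node u" "y = W (u @ [a])" using h unfolding words_def node_def by auto
        thus ?thesis using xy unfolding Es_def by auto
      next
        assume "w \<in> ext n k u"
        then obtain b t where b: "b \<in> C u" "w \<in> words n k" "w = u @ b # t" using ext_char[OF assms(1)] by blast
        have "x \<in> Vg n k (u @ [b])" using W_Vg_snoc[OF assms b(1)] b h(3) by auto
        moreover have "y \<in> Vg n k (u @ [b])" using W_Vg_snoc[OF assms b(1), of "w @ [a]"] b h(2,4) by auto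
        ultimately have "(x,y) \<in> Eg n k (u @ [b])" by (rule inEg)
        hence "e \<in> Es u b" unfolding Es_def xy by simp
        thus ?thesis using b(1) by blast
      qed
    next
      fix w assume h: "w \<in> words n k" "length w = k" "x = W w" "y = Zv"
      have "(u \<noteq> [] \<and> w = u) \<or> w \<in> ext n k u" using xV h(3) W_Vg by auto
      thus ?thesis
      proof
        assume "u \<noteq> [] \<and> w = u" thus ?thesis using h assms(2) by auto
      next
        assume "w \<in> ext n k u"
        then obtain b t where b: "b \<in> C u" "w \<in> words n k" "w = u @ b # t" using ext_char[OF assms(1)] by blast
        have "x \<in> Vg n k (u @ [b])" using W_Vg_snoc[OF assms b(1)] b h(3) by auto
        moreover have "y \<in> Vg n k (u @ [b])" using h(4) Zv_Vg by auto
        ultimately have "(x,y) \<in> Eg n k (u @ [b])" by (rule inEg)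
        hence "e \<in> Es u b" unfolding Es_def xy by simp
        thus ?thesis using b(1) by blast
      qed
    qed
  qed
qed

lemma leaf:
  assumes "valid n k u" "length u = k"
  shows "Vg n k u = {W u, Zv}" "Eg n k u = {(W u, Zv)}" "node u = W u"
proof -
  have ne: "u \<noteq> []" using assms k1 by auto
  thus nu: "node u = W u" unfolding node_def by auto
  have "ext n k u = {}" using assms unfolding ext_def words_def by auto
  thus V: "Vg n k u = {W u, Zv}" unfolding Vg_def nu by auto
  have uw: "u \<in> words n k" using assms k1 unfolding valid_def words_def by auto
  show "Eg n k u = {(W u, Zv)}"
  proof
    show "{(W u, Zv)} \<subseteq> Eg n k u" unfolding Eg_def V Gedges_def using uw assms by auto
    show "Eg n k u \<subseteq> {(W u, Zv)}" unfolding Eg_def V Gedges_def by auto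
  qed
qed

lemma Hwt_node:
  assumes "valid n k u" "length u < k"
  shows "Hwt n k k x (node u) (W (u @ [a])) = fact (k - length u) * x a"
proof (cases "u = []")
  case True thus ?thesis unfolding Hwt_def node_def by simp
next
  case False
  have "k - Suc (length u) + 1 = k - length u" using assms(2) by simp
  thus ?thesis using False unfolding Hwt_def node_def by simp
qed

lemma Hwt_leaf:
  shows "Hwt n k k x (W u) Zv = esym x 1 (C u)"
  unfolding Hwt_def qsym_def by (simp add: esym_0)

lemma alg_id: fixes f e1 e2 P c :: real
  shows "f * f * (f * e1) ^ N' * P * (c * e2) = (c * f) * e2 * (f ^ Suc N' * e1 ^ N' * P)"
  by (simp add: power_mult_distrib algebra_simps)

lemma gadget:
  assumes "valid n k u"
  shows "tree_poly (Vg n k u) (Eg n k u) (Hwt n k k x) =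
           fact (Suc (k - length u)) * esym x (Suc (k - length u)) (C u) * Psi x (k - length u) (C u) \<and>
         fpoly (Vg n k u) (Eg n k u) (node u) Zv (Hwt n k k x) =
           esym x (k - length u) (C u) * Psi x (k - length u) (C u)"
  using assms
proof (induction "k - length u" arbitrary: u)
  case 0
  hence len: "length u = k" unfolding valid_def by auto
  note L = leaf[OF 0(2) len]
  have "W u \<noteq> Zv" by simp
  show ?case unfolding L(1,2) L(3) using edge_poly[OF \<open>W u \<noteq> Zv\<close>, of "Hwt n k k x"] 0(1)[symmetric]
    by (simp add: Hwt_leaf esym_0)
next
  case (Suc m u)
  have len: "length u < k" and m: "m = k - length u - 1" using Suc(2) by auto
  have vu: "valid n k u" by fact
  define w where "w = Hwt n k k x"
  have fC: "finite (C u)" by simp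
  define N where "N = card (C u)"
  have cu: "card (set u) = length u" using vu unfolding valid_def by (simp add: distinct_card)
  have su: "set u \<subseteq> {1..n}" using vu unfolding valid_def by auto
  have NN: "N = n - length u" unfolding N_def using card_Diff_subset[OF finite_set su] cu by simp
  hence N1: "N \<ge> 1" using len kn by auto
  have child: "tree_poly (Vg n k (u @ [a])) (Eg n k (u @ [a])) w = fact (Suc m) * esym x (Suc m) (C u - {a}) * Psi x m (C u - {a}) \<and>
      fpoly (Vg n k (u @ [a])) (Eg n k (u @ [a])) (W (u @ [a])) Zv w = esym x m (C u - {a}) * Psi x m (C u - {a})"
    if a: "a \<in> C u" for a
  proof -
    have v': "valid n k (u @ [a])" using snoc_words[OF vu len a] by auto
    have "m = k - length (u @ [a])" using Suc(2) by simp
    moreover have "C (u @ [a]) = C u - {a}" by auto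
    moreover have "node (u @ [a]) = W (u @ [a])" unfolding node_def by simp
    ultimately show ?thesis using Suc(1)[OF _ v'] unfolding w_def by simp
  qed
  have ser: "tree_poly (Vs u a) (Es u a) w = fact (Suc m) * x a * (fact (Suc m) * esym x (Suc m) (C u - {a}) * Psi x m (C u - {a})) \<and>
       fpoly (Vs u a) (Es u a) (node u) Zv w = fact (Suc m) * esym x (Suc m) (C u) * Psi x m (C u - {a})"
    if a: "a \<in> C u" for a
  proof -
    interpret S: ser_setup "{node u, W (u @ [a])}" "Vg n k (u @ [a])" "{(node u, W (u @ [a]))}" "Eg n k (u @ [a])" "node u" "W (u @ [a])" Zv
    proof
      show "finite {node u, W (u @ [a])}" by simp
      show "finite (Vg n k (u @ [a]))" by (rule finite_Vg)
      show "{(node u, W (u @ [a]))} \<subseteq> {node u, W (u @ [a])} \<times> {node u, W (u @ [a])}" by auto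
      show "Eg n k (u @ [a]) \<subseteq> Vg n k (u @ [a]) \<times> Vg n k (u @ [a])" by (rule Eg_sub)
      show "{node u, W (u @ [a])} \<inter> Vg n k (u @ [a]) = {W (u @ [a])}"
        using node_notin[OF vu len a] W_Vg[of "u @ [a]" n k "u @ [a]"] by auto
      show "node u \<in> {node u, W (u @ [a])}" by simp
      show "Zv \<in> Vg n k (u @ [a])" by (rule Zv_Vg)
      show "node u \<noteq> W (u @ [a])" using node_notin[OF vu len a] W_Vg[of "u @ [a]" n k "u @ [a]"] by auto
      show "Zv \<noteq> W (u @ [a])" by simp
      show "{(node u, W (u @ [a]))} \<inter> Eg n k (u @ [a]) = {}" using node_notin[OF vu len a] Eg_sub by auto
    qed
    have ne: "node u \<noteq> W (u @ [a])" using node_notin[OF vu len a] W_Vg[of "u @ [a]" n k "u @ [a]"] by auto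
    have VE: "Vs u a = {node u, W (u @ [a])} \<union> Vg n k (u @ [a])" "Es u a = {(node u, W (u @ [a]))} \<union> Eg n k (u @ [a])"
      unfolding Vs_def Es_def using W_Vg[of "u @ [a]" n k "u @ [a]"] by auto
    have wa: "w (node u) (W (u @ [a])) = fact (Suc m) * x a" unfolding w_def using Hwt_node[OF vu len] Suc(2) by simp
    have rec: "esym x (Suc m) (C u) = x a * esym x m (C u - {a}) + esym x (Suc m) (C u - {a})"
      using esym_rec[OF fC a] by simp
    show ?thesis unfolding VE S.ser_poly edge_poly[OF ne] wa using child[OF a] rec
      by (simp add: algebra_simps)
  qed
  have fam: "tree_poly ({node u, Zv} \<union> \<Union>(Vs u ` C u)) (\<Union>(Es u ` C u)) w =
           (\<Sum>i\<in>C u. tree_poly (Vs u i) (Es u i) w * (\<Prod>j\<in>C u - {i}. fpoly (Vs u j) (Es u j) (node u) Zv w)) \<and>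
         fpoly ({node u, Zv} \<union> \<Union>(Vs u ` C u)) (\<Union>(Es u ` C u)) (node u) Zv w = (\<Prod>i\<in>C u. fpoly (Vs u i) (Es u i) (node u) Zv w)"
  proof (rule par_family[OF fC node_Zv])
    fix i assume i: "i \<in> C u"
    show "finite (Vs u i) \<and> Es u i \<subseteq> Vs u i \<times> Vs u i \<and> node u \<in> Vs u i \<and> Zv \<in> Vs u i"
      using Es_sub_V[OF vu len i] finite_Vg Zv_Vg unfolding Vs_def by auto
  next
    fix i j assume "i \<in> C u" "j \<in> C u" "i \<noteq> j"
    thus "Vs u i \<inter> Vs u j = {node u, Zv} \<and> Es u i \<inter> Es u j = {}"
      using Vs_int[OF vu len] Es_disj[OF vu len] by auto
  qed
  note VgD = Vg_decomp[OF vu len] and EgD = Eg_decomp[OF vu len]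
  define P where "P = (\<Prod>a\<in>C u. Psi x m (C u - {a}))"
  have PsiU: "Psi x (Suc m) (C u) = fact (Suc m) ^ N * esym x (Suc m) (C u) ^ (N - 1) * P"
    unfolding P_def N_def by simp
  have fpU: "fpoly (Vg n k u) (Eg n k u) (node u) Zv w = esym x (Suc m) (C u) * Psi x (Suc m) (C u)"
  proof -
    have "fpoly (Vg n k u) (Eg n k u) (node u) Zv w = (\<Prod>i\<in>C u. fpoly (Vs u i) (Es u i) (node u) Zv w)"
      unfolding VgD EgD using fam by blast
    also have "\<dots> = (\<Prod>i\<in>C u. fact (Suc m) * esym x (Suc m) (C u) * Psi x m (C u - {i}))"
      by (rule prod.cong[OF refl]) (use ser in blast)
    also have "\<dots> = (fact (Suc m) * esym x (Suc m) (C u)) ^ N * P"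
      unfolding P_def N_def by (simp add: prod.distrib)
    also have "\<dots> = esym x (Suc m) (C u) * Psi x (Suc m) (C u)"
    proof -
      have "N = Suc (N - 1)" using N1 by simp
      then show ?thesis unfolding PsiU by (metis (no_types, lifting) mult.assoc mult.left_commute power_Suc power_mult_distrib)
    qed
    finally show ?thesis .
  qed
  have tpU: "tree_poly (Vg n k u) (Eg n k u) w = fact (Suc (Suc m)) * esym x (Suc (Suc m)) (C u) * Psi x (Suc m) (C u)"
  proof -
    define F where "F = fact (Suc m) * esym x (Suc m) (C u)"
    have "tree_poly (Vg n k u) (Eg n k u) w =
        (\<Sum>i\<in>C u. (fact (Suc m) * x i * (fact (Suc m) * esym x (Suc m) (C u - {i}) * Psi x m (C u - {i}))) *
            (\<Prod>j\<in>C u - {i}. F * Psi x m (C u - {j})))"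
    proof -
      have "tree_poly (Vg n k u) (Eg n k u) w = (\<Sum>i\<in>C u. tree_poly (Vs u i) (Es u i) w * (\<Prod>j\<in>C u - {i}. fpoly (Vs u j) (Es u j) (node u) Zv w))"
        unfolding VgD EgD using fam by blast
      also have "\<dots> = (\<Sum>i\<in>C u. (fact (Suc m) * x i * (fact (Suc m) * esym x (Suc m) (C u - {i}) * Psi x m (C u - {i}))) *
            (\<Prod>j\<in>C u - {i}. F * Psi x m (C u - {j})))"
      proof (rule sum.cong[OF refl])
        fix i assume i: "i \<in> C u"
        have "(\<Prod>j\<in>C u - {i}. fpoly (Vs u j) (Es u j) (node u) Zv w) = (\<Prod>j\<in>C u - {i}. F * Psi x m (C u - {j}))"
          by (rule prod.cong[OF refl]) (use ser in \<open>auto simp: F_def\<close>)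
        thus "tree_poly (Vs u i) (Es u i) w * (\<Prod>j\<in>C u - {i}. fpoly (Vs u j) (Es u j) (node u) Zv w) =
          (fact (Suc m) * x i * (fact (Suc m) * esym x (Suc m) (C u - {i}) * Psi x m (C u - {i}))) *
            (\<Prod>j\<in>C u - {i}. F * Psi x m (C u - {j}))" using ser[OF i] by simp
      qed
      finally show ?thesis .
    qed
    also have "\<dots> = (\<Sum>i\<in>C u. fact (Suc m) * fact (Suc m) * F ^ (N - 1) * P * (x i * esym x (Suc m) (C u - {i})))"
    proof (rule sum.cong[OF refl])
      fix i assume i: "i \<in> C u"
      have "(\<Prod>j\<in>C u - {i}. F * Psi x m (C u - {j})) = F ^ (N - 1) * (\<Prod>j\<in>C u - {i}. Psi x m (C u - {j}))"
        using i by (simp add: prod.distrib N_def card_Diff_singleton)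
      moreover have "P = Psi x m (C u - {i}) * (\<Prod>j\<in>C u - {i}. Psi x m (C u - {j}))"
        unfolding P_def using prod.remove[OF fC i] by simp
      ultimately show "(fact (Suc m) * x i * (fact (Suc m) * esym x (Suc m) (C u - {i}) * Psi x m (C u - {i}))) *
            (\<Prod>j\<in>C u - {i}. F * Psi x m (C u - {j})) = fact (Suc m) * fact (Suc m) * F ^ (N - 1) * P * (x i * esym x (Suc m) (C u - {i}))"
        by (simp add: algebra_simps)
    qed
    also have "\<dots> = fact (Suc m) * fact (Suc m) * F ^ (N - 1) * P * (\<Sum>i\<in>C u. x i * esym x (Suc m) (C u - {i}))"
      by (simp add: sum_distrib_left)
    also have "\<dots> = fact (Suc m) * fact (Suc m) * F ^ (N - 1) * P * (of_nat (Suc (Suc m)) * esym x (Suc (Suc m)) (C u))"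
      using esym_sum[OF fC, of x "Suc m"] by simp
    also have "\<dots> = fact (Suc (Suc m)) * esym x (Suc (Suc m)) (C u) * Psi x (Suc m) (C u)"
    proof -
      obtain N' where N': "N = Suc N'" using N1 by (cases N) auto
      have ff: "(fact (Suc (Suc m)) :: real) = of_nat (Suc (Suc m)) * fact (Suc m)" by (rule fact_Suc)
      show ?thesis unfolding PsiU F_def N' diff_Suc_1 ff by (rule alg_id)
    qed
    finally show ?thesis .
  qed
  have km: "k - length u = Suc m" using Suc(2) by simp
  show ?case unfolding km using fpU tpU unfolding w_def by simp
qed

end



lemma Gverts_eq: assumes "1 \<le> k" shows "Gverts n k = Vg n k []"
proof -
  have "ext n k [] = words n k" unfolding ext_def words_def by (auto simp: Suc_le_length_iff)
  thus ?thesis unfolding Gverts_def Vg_def node_def by auto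
qed

lemma Gedges_sub: assumes "1 \<le> k" shows "Gedges n k \<subseteq> Gverts n k \<times> Gverts n k"
proof
  fix e assume "e \<in> Gedges n k"
  thus "e \<in> Gverts n k \<times> Gverts n k"
  proof (unfold Gedges_def, elim UnE CollectE exE conjE)
    fix i assume "e = (Sv, W [i])" "i \<in> {1..n}"
    moreover have "[i] \<in> words n k" using calculation assms unfolding words_def by auto
    ultimately show ?thesis unfolding Gverts_def by auto
  next
    fix w a assume h: "e = (W w, W (w @ [a]))" "w \<noteq> []" "w @ [a] \<in> words n k"
    have "w \<in> words n k" using h unfolding words_def by (auto simp: neq_Nil_conv)
    thus ?thesis using h unfolding Gverts_def by auto
  next
    fix w assume "e = (W w, Zv)" "w \<in> words n k"
    thus ?thesis unfolding Gverts_def by auto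
  qed
qed

theorem lemma2:
  fixes n k :: nat
  assumes "1 \<le> k" and "k \<le> n - 1"
  shows "\<exists>C::real. C > 0 \<and> (\<forall>x :: nat \<Rightarrow> real.
           H n k k x = C * esym x (k + 1) {1..n} *
             (\<Prod>S\<in>{S. S \<subseteq> {1..n} \<and> card S \<le> k - 1}.
                (partials S (\<lambda>y. esym y k {1..n}) x) ^ (fact (card S) * (n - card S - 1))))"
proof -
  have kn: "k < n" using assms by auto
  interpret gsetup n k using assms(1) kn by unfold_locales
  define C0 where "C0 = (fact (Suc k) :: real) * cst k n"
  have pos: "C0 > 0" unfolding C0_def using cst_pos by simp
  have main: "H n k k x = C0 * esym x (k + 1) {1..n} *
             (\<Prod>S\<in>{S. S \<subseteq> {1..n} \<and> card S \<le> k - 1}.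
                (partials S (\<lambda>y. esym y k {1..n}) x) ^ (fact (card S) * (n - card S - 1)))" for x
  proof -
    have Eeq: "Gedges n k = Eg n k []"
      unfolding Eg_def Gverts_eq[OF assms(1), symmetric] using Gedges_sub[OF assms(1)] by auto
    have v: "valid n k []" unfolding valid_def by simp
    have "H n k k x = fact (Suc k) * esym x (Suc k) {1..n} * Psi x k {1..n}"
      unfolding H_def Gverts_eq[OF assms(1)] Eeq using gadget[OF v, of x] by simp
    also have "Psi x k {1..n} = cst k n * Qf x k {1..n}" using Psi_formula[of "{1..n}" x k] by simp
    also have "Qf x k {1..n} = (\<Prod>S\<in>{S. S \<subseteq> {1..n} \<and> card S \<le> k - 1}.
                (partials S (\<lambda>y. esym y k {1..n}) x) ^ (fact (card S) * (n - card S - 1)))"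
      unfolding Qf_def
    proof (rule prod.cong)
      show "{S. S \<subseteq> {1..n} \<and> card S < k} = {S. S \<subseteq> {1..n} \<and> card S \<le> k - 1}" using assms(1) by auto
    next
      fix S assume S: "S \<in> {S. S \<subseteq> {1..n} \<and> card S \<le> k - 1}"
      hence "card S \<le> k" by auto
      hence "partials S (\<lambda>y. esym y k {1..n}) x = esym x (k - card S) ({1..n} - S)"
        using partials_esym[of "{1..n}" S k x] S by auto
      thus "esym x (k - card S) ({1..n} - S) ^ (fact (card S) * (card {1..n} - card S - 1)) =
            partials S (\<lambda>y. esym y k {1..n}) x ^ (fact (card S) * (n - card S - 1))" by simp
    qed
    finally show ?thesis unfolding C0_def by (simp add: algebra_simps)
  qed
  show ?thesis using pos main by blast
qed


end
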